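(* The word $f=111000$ is tilde-isometric.
   Context: Words are over $\{0,1\}$. A word is $f$-free if it does not contain $f$ as a factor. Operations: the replacement $R_i$ flips the symbol at position $i$ and modifies position $i$. The swap $S_i$ is defined when $a_i\ne a_{i+1}$, exchanges these two symbols, and modifies positions $i,i+1$. $\mathrm{dist}_\sim(u,v)$ is the minimum number of replacements and swaps transforming $u$ into the equal-length word $v$. A tilde-transformation from $u$ to $v$ is a sequence of words from $u$ to $v$, each obtained from the previous by one replacement or swap. It is $f$-free if all its words are $f$-free. It is minimal if it uses exactly $\mathrm{dist}_\sim(u,v)$ operations and each position is modified by at most one operation. A word $f$ of length $n$ is tilde-isometric if, for every $m>n$ and all $f$-free $u,v\in\{0,1\}^m$, there exists a minimal tilde-transformation from $u$ to $v$ that is $f$-free. *)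

theory Defs
  imports Main "HOL-Library.Sublist"
begin

text \<open>Binary words are represented as bool lists (True = 1, False = 0);
positions are 0-indexed.\<close>

definition f_free :: "bool list \<Rightarrow> bool list \<Rightarrow> bool" where
  "f_free f w \<longleftrightarrow> \<not> sublist f w"

datatype edit_op = Rep nat | Swp nat

fun op_ok :: "bool list \<Rightarrow> edit_op \<Rightarrow> bool" where
  "op_ok w (Rep i) = (i < length w)"
| "op_ok w (Swp i) = (Suc i < length w \<and> w ! i \<noteq> w ! Suc i)"

fun apply_op :: "bool list \<Rightarrow> edit_op \<Rightarrow> bool list" where
  "apply_op w (Rep i) = w[i := \<not> w ! i]"
| "apply_op w (Swp i) = w[i := w ! Suc i, Suc i := w ! i]"

fun modified :: "edit_op \<Rightarrow> nat set" where
  "modified (Rep i) = {i}"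
| "modified (Swp i) = {i, Suc i}"

fun valid_ops :: "bool list \<Rightarrow> edit_op list \<Rightarrow> bool" where
  "valid_ops w [] = True"
| "valid_ops w (o1 # os) = (op_ok w o1 \<and> valid_ops (apply_op w o1) os)"

fun run :: "bool list \<Rightarrow> edit_op list \<Rightarrow> bool list list" where
  "run w [] = [w]"
| "run w (o1 # os) = w # run (apply_op w o1) os"

definition transforms :: "bool list \<Rightarrow> edit_op list \<Rightarrow> bool list \<Rightarrow> bool" where
  "transforms u os v \<longleftrightarrow> valid_ops u os \<and> last (run u os) = v"

definition dist_tilde :: "bool list \<Rightarrow> bool list \<Rightarrow> nat" where
  "dist_tilde u v = (LEAST k. \<exists>os. transforms u os v \<and> length os = k)"

definition minimal_transformation :: "bool list \<Rightarrow> edit_op list \<Rightarrow> bool list \<Rightarrow> bool" where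
  "minimal_transformation u os v \<longleftrightarrow>
     transforms u os v \<and> length os = dist_tilde u v \<and>
     (\<forall>i j. i < j \<and> j < length os \<longrightarrow> modified (os ! i) \<inter> modified (os ! j) = {})"

definition f_free_transformation :: "bool list \<Rightarrow> bool list \<Rightarrow> edit_op list \<Rightarrow> bool" where
  "f_free_transformation f u os \<longleftrightarrow> (\<forall>w \<in> set (run u os). f_free f w)"

definition tilde_isometric :: "bool list \<Rightarrow> bool" where
  "tilde_isometric f \<longleftrightarrow>
     (\<forall>m > length f. \<forall>u v. length u = m \<and> length v = m \<and> f_free f u \<and> f_free f v \<longrightarrow>
        (\<exists>os. minimal_transformation u os v \<and> f_free_transformation f u os))"

end

theory Submission
  imports Defs
begin

definition occ :: "bool list \<Rightarrow> nat \<Rightarrow> bool" where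
  "occ w s \<longleftrightarrow> s + 6 \<le> length w \<and> w!s \<and> w!(s+1) \<and> w!(s+2) \<and> \<not> w!(s+3) \<and> \<not> w!(s+4) \<and> \<not> w!(s+5)"

lemma sublist_occ: "sublist [True,True,True,False,False,False] w \<longleftrightarrow> (\<exists>s. occ w s)"
proof
  assume "sublist [True,True,True,False,False,False] w"
  then obtain ps ss where w: "w = ps @ [True,True,True,False,False,False] @ ss"
    unfolding sublist_def by blast
  have "occ w (length ps)" unfolding occ_def w by (simp add: nth_append)
  then show "\<exists>s. occ w s" by blast
next
  assume "\<exists>s. occ w s"
  then obtain s where o: "occ w s" by blast
  have len: "s + 6 \<le> length w" using o by (simp add: occ_def)
  have t: "take 6 (drop s w) = [True,True,True,False,False,False]"
  proof (rule nth_equalityI)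
    show "length (take 6 (drop s w)) = length [True,True,True,False,False,False]" using len by simp
    fix i assume "i < length (take 6 (drop s w))"
    then have "i < 6" by simp
    then have "i = 0 \<or> i = 1 \<or> i = 2 \<or> i = 3 \<or> i = 4 \<or> i = 5" by auto
    then show "take 6 (drop s w) ! i = [True,True,True,False,False,False] ! i"
      using o len by (auto simp: occ_def add.commute)
  qed
  have "w = take s w @ take 6 (drop s w) @ drop 6 (drop s w)"
    by (simp only: append_take_drop_id)
  then have "w = take s w @ [True,True,True,False,False,False] @ drop 6 (drop s w)" using t by simp
  then show "sublist [True,True,True,False,False,False] w" unfolding sublist_def by blast
qed

lemma free_iff: "f_free [True,True,True,False,False,False] w \<longleftrightarrow> (\<forall>s. \<not> occ w s)"
  unfolding f_free_def using sublist_occ by blast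

definition djs :: "edit_op set \<Rightarrow> bool" where
  "djs S \<longleftrightarrow> (\<forall>x\<in>S. \<forall>y\<in>S. x \<noteq> y \<longrightarrow> modified x \<inter> modified y = {})"

definition okall :: "bool list \<Rightarrow> edit_op set \<Rightarrow> bool" where
  "okall w S \<longleftrightarrow> (\<forall>x\<in>S. op_ok w x)"

definition val :: "bool list \<Rightarrow> edit_op set \<Rightarrow> nat \<Rightarrow> bool" where
  "val w S k = (if Rep k \<in> S then \<not> w!k else if Swp k \<in> S then w!Suc k
                else if 0 < k \<and> Swp (k-1) \<in> S then w!(k-1) else w!k)"

definition res :: "bool list \<Rightarrow> edit_op set \<Rightarrow> bool list" where
  "res w S = map (val w S) [0..<length w]"

lemma length_res[simp]: "length (res w S) = length w"
  by (simp add: res_def)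

lemma nth_res: "k < length w \<Longrightarrow> res w S ! k = val w S k"
  by (simp add: res_def)

lemma length_apply[simp]: "length (apply_op w x) = length w"
  by (cases x) auto

lemma apply_unmod: "k \<notin> modified x \<Longrightarrow> apply_op w x ! k = w ! k"
  by (cases x) auto

lemma in_mod: "k \<in> modified x \<longleftrightarrow> (x = Rep k \<or> x = Swp k \<or> (0 < k \<and> x = Swp (k-1)))"
  by (cases x) auto

lemma djs_sub: "djs S \<Longrightarrow> T \<subseteq> S \<Longrightarrow> djs T"
  unfolding djs_def by blast

lemma okall_sub: "okall w S \<Longrightarrow> T \<subseteq> S \<Longrightarrow> okall w T"
  unfolding okall_def by blast

lemma val_unc: "(\<forall>x\<in>S. k \<notin> modified x) \<Longrightarrow> val w S k = w ! k"
proof -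
  assume a: "\<forall>x\<in>S. k \<notin> modified x"
  have "Rep k \<notin> S" "Swp k \<notin> S" "0 < k \<longrightarrow> Swp (k-1) \<notin> S" using a by force+
  then show ?thesis unfolding val_def by auto
qed

lemma val_Rep: "Rep k \<in> S \<Longrightarrow> val w S k = (\<not> w ! k)"
  unfolding val_def by simp

lemma val_Swp1: "Swp i \<in> S \<Longrightarrow> djs S \<Longrightarrow> val w S i = w ! Suc i"
proof -
  assume a: "Swp i \<in> S" "djs S"
  have "Rep i \<notin> S" using a unfolding djs_def by force
  then show ?thesis using a unfolding val_def by simp
qed

lemma val_Swp2: "Swp i \<in> S \<Longrightarrow> djs S \<Longrightarrow> val w S (Suc i) = w ! i"
proof -
  assume a: "Swp i \<in> S" "djs S"
  have "Rep (Suc i) \<notin> S" "Swp (Suc i) \<notin> S" using a unfolding djs_def by force+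
  then show ?thesis using a unfolding val_def by simp
qed

lemma djs_other: "djs S \<Longrightarrow> x \<in> S \<Longrightarrow> y \<in> S \<Longrightarrow> k \<in> modified x \<Longrightarrow> k \<in> modified y \<Longrightarrow> x = y"
  unfolding djs_def by blast

lemma res_remove:
  assumes x: "x \<in> S" and d: "djs S" and ok: "okall w S"
  shows "res (apply_op w x) (S - {x}) = res w S"
proof (rule nth_equalityI)
  show "length (res (apply_op w x) (S - {x})) = length (res w S)" by simp
  fix k assume "k < length (res (apply_op w x) (S - {x}))"
  then have k: "k < length w" by simp
  let ?w = "apply_op w x"
  have d': "djs (S - {x})" using d djs_sub by blast
  show "res ?w (S - {x}) ! k = res w S ! k"
  proof (cases "k \<in> modified x")
    case True
    have unc: "\<forall>y\<in>S - {x}. k \<notin> modified y" using True djs_other[OF d] x by blast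
    have L: "res ?w (S - {x}) ! k = ?w ! k" using k val_unc[OF unc] by (simp add: nth_res)
    have okk: "op_ok w x" using ok x unfolding okall_def by blast
    show ?thesis
    proof (cases x)
      case (Rep i)
      then have "i = k" using True by simp
      then show ?thesis using L Rep x k by (simp add: nth_res val_Rep)
    next
      case (Swp i)
      then have ki: "k = i \<or> k = Suc i" using True by auto
      have si: "Suc i < length w" using okk Swp by simp
      show ?thesis
      proof (cases "k = i")
        case True
        then show ?thesis using L Swp x k si d by (simp add: nth_res val_Swp1)
      next
        case False
        then have "k = Suc i" using ki by simp
        then show ?thesis using L Swp x k si d by (simp add: nth_res val_Swp2)
      qed
    qed
  next
    case False
    show ?thesis
    proof (cases "\<exists>y\<in>S. k \<in> modified y")
      case True
      then obtain y where y: "y \<in> S" "k \<in> modified y" by blast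
      have ne: "y \<noteq> x" using y False by blast
      have dis: "modified y \<inter> modified x = {}" using d x y ne unfolding djs_def by blast
      have yS: "y \<in> S - {x}" using y ne by blast
      show ?thesis
      proof (cases y)
        case (Rep i)
        then have "i = k" using y by simp
        then show ?thesis using Rep y yS k False by (simp add: nth_res val_Rep apply_unmod)
      next
        case (Swp i)
        have m1: "i \<notin> modified x" "Suc i \<notin> modified x" using dis Swp by auto
        have ki: "k = i \<or> k = Suc i" using y Swp by auto
        show ?thesis
        proof (cases "k = i")
          case True
          then show ?thesis using Swp y yS k d d' m1 by (simp add: nth_res val_Swp1 apply_unmod)
        next
          case False
          then have "k = Suc i" using ki by simp
          then show ?thesis using Swp y yS k d d' m1 by (simp add: nth_res val_Swp2 apply_unmod)
        qed
      qed
    next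
      case nc: False
      have u1: "\<forall>y\<in>S. k \<notin> modified y" using nc by blast
      have u2: "\<forall>y\<in>S - {x}. k \<notin> modified y" using nc by blast
      show ?thesis using k val_unc[OF u1] val_unc[OF u2] False by (simp add: nth_res apply_unmod)
    qed
  qed
qed

lemma res_empty[simp]: "res w {} = w"
  by (rule nth_equalityI) (auto simp: nth_res val_def)

definition plan :: "bool list \<Rightarrow> edit_op set \<Rightarrow> bool list \<Rightarrow> bool" where
  "plan w S v \<longleftrightarrow> finite S \<and> djs S \<and> okall w S \<and> res w S = v"

lemma val_cov:
  assumes "x \<in> S" "djs S" "k \<in> modified x"
  shows "val w S k = (case x of Rep i \<Rightarrow> \<not> w!k | Swp i \<Rightarrow> if k = i then w!Suc i else w!i)"
proof (cases x)
  case (Rep i)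
  then show ?thesis using assms by (simp add: val_Rep)
next
  case (Swp i)
  then have "k = i \<or> k = Suc i" using assms by auto
  then show ?thesis using assms Swp by (auto simp: val_Swp1 val_Swp2)
qed

lemma val_transfer:
  assumes "x \<in> S1" "x \<in> S2" "djs S1" "djs S2" "k \<in> modified x"
    and "\<forall>j\<in>modified x. w1!j = w2!j"
  shows "val w1 S1 k = val w2 S2 k"
  using val_cov[OF assms(1,3,5), of w1] val_cov[OF assms(2,4,5), of w2] assms(5,6)
  by (cases x) auto

lemma op_ok_transfer:
  "length w1 = length w2 \<Longrightarrow> (\<forall>j\<in>modified x. w1!j = w2!j) \<Longrightarrow> op_ok w1 x = op_ok w2 x"
  by (cases x) auto

lemma mod_bound: "op_ok w x \<Longrightarrow> j \<in> modified x \<Longrightarrow> j < length w"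
  by (cases x) auto

lemma card_modified: "card (modified x) \<le> 2"
  by (cases x) (auto simp: card_insert_if)

lemma finite_modified[simp]: "finite (modified x)"
  by (cases x) auto

lemma patch:
  assumes p: "plan w' S' v" and len: "length w = length w'" and fT: "finite T"
    and Tb: "\<forall>k\<in>T. k < length w"
    and agree: "\<forall>k. k \<notin> T \<longrightarrow> w!k = w'!k"
    and clos: "\<forall>y\<in>S'. modified y \<inter> T = {} \<or> modified y \<subseteq> T"
  shows "plan w ({y\<in>S'. modified y \<inter> T = {}} \<union> Rep ` {k\<in>T. v!k \<noteq> w!k}) v"
proof -
  let ?A = "{y\<in>S'. modified y \<inter> T = {}}"
  let ?B = "Rep ` {k\<in>T. v!k \<noteq> w!k}"
  let ?S = "?A \<union> ?B"
  have fin: "finite S'" and d: "djs S'" and ok: "okall w' S'" and r: "res w' S' = v"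
    using p unfolding plan_def by auto
  have lv: "length v = length w" using r len by auto
  have finS: "finite ?S" using fin fT by auto
  have dS: "djs ?S"
    unfolding djs_def
  proof (intro ballI impI)
    fix x y assume x: "x \<in> ?S" and y: "y \<in> ?S" and ne: "x \<noteq> y"
    show "modified x \<inter> modified y = {}"
    proof (cases "x \<in> ?A")
      case xA: True
      show ?thesis
      proof (cases "y \<in> ?A")
        case True
        then show ?thesis using xA ne d unfolding djs_def by blast
      next
        case False
        then obtain k where "y = Rep k" "k \<in> T" using y by blast
        then show ?thesis using xA by auto
      qed
    next
      case False
      then obtain k where xk: "x = Rep k" "k \<in> T" using x by blast
      show ?thesis
      proof (cases "y \<in> ?A")
        case True
        then show ?thesis using xk by auto
      next
        case False
        then obtain k' where "y = Rep k'" using y by blast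
        then show ?thesis using xk ne by auto
      qed
    qed
  qed
  have okS: "okall w ?S"
    unfolding okall_def
  proof
    fix x assume x: "x \<in> ?S"
    show "op_ok w x"
    proof (cases "x \<in> ?A")
      case True
      then have "\<forall>j\<in>modified x. w!j = w'!j" using agree by blast
      then show ?thesis using op_ok_transfer[OF len] True ok unfolding okall_def by blast
    next
      case False
      then obtain k where "x = Rep k" "k \<in> T" using x by blast
      then show ?thesis using Tb by auto
    qed
  qed
  have rS: "res w ?S = v"
  proof (rule nth_equalityI)
    show "length (res w ?S) = length v" using lv by simp
    fix k assume "k < length (res w ?S)"
    then have k: "k < length w" by simp
    have vk: "v ! k = val w' S' k" using r k len by (metis nth_res)
    show "res w ?S ! k = v ! k"
    proof (cases "k \<in> T")
      case kT: True
      show ?thesis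
      proof (cases "v!k \<noteq> w!k")
        case True
        then have "Rep k \<in> ?S" using kT by blast
        then show ?thesis using True k by (simp add: nth_res val_Rep)
      next
        case False
        have "\<forall>x\<in>?S. k \<notin> modified x"
        proof
          fix x assume x: "x \<in> ?S"
          show "k \<notin> modified x"
          proof (cases "x \<in> ?A")
            case True then show ?thesis using kT by blast
          next
            case nA: False
            then obtain k' where "x = Rep k'" "v!k' \<noteq> w!k'" using x by blast
            then show ?thesis using False by auto
          qed
        qed
        then show ?thesis using False k by (simp add: nth_res val_unc)
      qed
    next
      case kT: False
      show ?thesis
      proof (cases "\<exists>y\<in>S'. k \<in> modified y")
        case True
        then obtain y where y: "y \<in> S'" "k \<in> modified y" by blast
        have yA: "y \<in> ?A" using clos y kT by blast
        have ag: "\<forall>j\<in>modified y. w!j = w'!j" using yA agree by blast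
        have "val w ?S k = val w' S' k"
          using val_transfer[of y ?S S' k w w'] yA y dS d ag by blast
        then show ?thesis using vk k by (simp add: nth_res)
      next
        case False
        have u1: "\<forall>x\<in>S'. k \<notin> modified x" using False by blast
        have u2: "\<forall>x\<in>?S. k \<notin> modified x" using False kT by auto
        show ?thesis using vk k val_unc[OF u1] val_unc[OF u2] agree kT by (simp add: nth_res)
      qed
    qed
  qed
  show ?thesis unfolding plan_def using finS dS okS rS by blast
qed

lemma patch_card:
  assumes "finite S'" "finite T"
  shows "card ({y\<in>S'. modified y \<inter> T = {}} \<union> Rep ` {k\<in>T. v!k \<noteq> w!k})
         \<le> card {y\<in>S'. modified y \<inter> T = {}} + card {k\<in>T. v!k \<noteq> w!k}"
proof -
  have "card ({y\<in>S'. modified y \<inter> T = {}} \<union> Rep ` {k\<in>T. v!k \<noteq> w!k})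
        \<le> card {y\<in>S'. modified y \<inter> T = {}} + card (Rep ` {k\<in>T. v!k \<noteq> w!k})"
    by (rule card_Un_le)
  also have "card (Rep ` {k\<in>T. v!k \<noteq> w!k}) \<le> card {k\<in>T. v!k \<noteq> w!k}"
    by (rule card_image_le) (use assms in auto)
  finally show ?thesis by simp
qed

lemma card_filter_less:
  assumes "finite S'" "y \<in> S'" "modified y \<inter> T \<noteq> {}"
  shows "card {z\<in>S'. modified z \<inter> T = {}} < card S'"
  by (rule psubset_card_mono) (use assms in auto)

lemma G1:
  assumes okx: "op_ok w x" and p: "plan (apply_op w x) S' v"
    and y: "y \<in> S'" and sub: "modified x \<subseteq> modified y"
  shows "\<exists>S. plan w S v \<and> card S \<le> card S' + 1"
proof -
  let ?w = "apply_op w x"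
  let ?T = "modified y"
  have fin: "finite S'" and d: "djs S'" and ok: "okall ?w S'" using p unfolding plan_def by auto
  have clos: "\<forall>z\<in>S'. modified z \<inter> ?T = {} \<or> modified z \<subseteq> ?T"
  proof
    fix z assume z: "z \<in> S'"
    show "modified z \<inter> ?T = {} \<or> modified z \<subseteq> ?T"
    proof (cases "z = y")
      case True then show ?thesis by simp
    next
      case False
      then have "modified z \<inter> modified y = {}" using d z y unfolding djs_def by blast
      then show ?thesis by simp
    qed
  qed
  have oky: "op_ok ?w y" using ok y unfolding okall_def by blast
  have Tb: "\<forall>k\<in>?T. k < length w"
  proof
    fix k assume "k \<in> ?T"
    then show "k < length w" using mod_bound[OF oky] by simp
  qed
  have agree: "\<forall>k. k \<notin> ?T \<longrightarrow> w!k = ?w!k"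
  proof (intro allI impI)
    fix k assume "k \<notin> ?T"
    then have "k \<notin> modified x" using sub by blast
    then show "w!k = ?w!k" using apply_unmod[of k x w] by simp
  qed
  have pl: "plan w ({z\<in>S'. modified z \<inter> ?T = {}} \<union> Rep ` {k\<in>?T. v!k \<noteq> w!k}) v"
    by (rule patch[OF p _ _ Tb agree clos]) auto
  have c1: "card {z\<in>S'. modified z \<inter> ?T = {}} < card S'"
  proof (rule card_filter_less[OF fin y])
    show "modified y \<inter> modified y \<noteq> {}" by (cases y) auto
  qed
  have c2: "card {k\<in>?T. v!k \<noteq> w!k} \<le> 2"
    using card_mono[of ?T "{k\<in>?T. v!k \<noteq> w!k}"] card_modified[of y] by auto
  have "card ({z\<in>S'. modified z \<inter> ?T = {}} \<union> Rep ` {k\<in>?T. v!k \<noteq> w!k}) \<le> card S' + 1"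
    using patch_card[OF fin finite_modified[of y], of v w] c1 c2 by linarith
  then show ?thesis using pl by blast
qed

lemma G2:
  assumes okx: "op_ok w (Rep i)" and p: "plan (apply_op w (Rep i)) S' v"
    and unc: "\<forall>y\<in>S'. i \<notin> modified y"
  shows "\<exists>S. plan w S v \<and> card S \<le> card S' + 1"
proof -
  let ?w = "apply_op w (Rep i)"
  have fin: "finite S'" using p unfolding plan_def by auto
  have clos: "\<forall>z\<in>S'. modified z \<inter> {i} = {} \<or> modified z \<subseteq> {i}" using unc by blast
  have Tb: "\<forall>k\<in>{i}. k < length w" using okx by simp
  have agree: "\<forall>k. k \<notin> {i} \<longrightarrow> w!k = ?w!k" using apply_unmod[of _ "Rep i" w] by simp
  have pl: "plan w ({z\<in>S'. modified z \<inter> {i} = {}} \<union> Rep ` {k\<in>{i}. v!k \<noteq> w!k}) v"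
    by (rule patch[OF p _ _ Tb agree clos]) auto
  have c1: "card {z\<in>S'. modified z \<inter> {i} = {}} \<le> card S'"
    using fin by (intro card_mono) auto
  have c2: "card {k\<in>{i}. v!k \<noteq> w!k} \<le> 1"
    by (rule order_trans[OF card_mono[of "{i}"]]) auto
  have "card ({z\<in>S'. modified z \<inter> {i} = {}} \<union> Rep ` {k\<in>{i}. v!k \<noteq> w!k}) \<le> card S' + 1"
    using patch_card[OF fin, of "{i}" v w] c1 c2 by simp
  then show ?thesis using pl by blast
qed

lemma B0:
  assumes okx: "op_ok w (Swp i)" and p: "plan (apply_op w (Swp i)) S' v"
    and unc: "\<forall>y\<in>S'. modified y \<inter> {i, Suc i} = {}"
  shows "\<exists>S. plan w S v \<and> card S \<le> card S' + 1"
proof -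
  let ?x = "Swp i"
  let ?w = "apply_op w ?x"
  let ?S = "insert ?x S'"
  have fin: "finite S'" and d: "djs S'" and ok: "okall ?w S'" and r: "res ?w S' = v"
    using p unfolding plan_def by auto
  have si: "Suc i < length w" and ne: "w!i \<noteq> w!Suc i" using okx by auto
  have dS: "djs ?S" using d unc unfolding djs_def by auto
  have ag: "\<And>y. y \<in> S' \<Longrightarrow> \<forall>j\<in>modified y. w!j = ?w!j"
  proof -
    fix y assume y: "y \<in> S'"
    show "\<forall>j\<in>modified y. w!j = ?w!j"
    proof
      fix j assume "j \<in> modified y"
      then have "j \<notin> modified ?x" using unc y by auto
      then show "w!j = ?w!j" using apply_unmod[of j ?x w] by simp
    qed
  qed
  have okS: "okall w ?S"
    unfolding okall_def
  proof
    fix y assume "y \<in> ?S"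
    then show "op_ok w y"
    proof
      assume "y = ?x" then show ?thesis using okx by simp
    next
      assume y: "y \<in> S'"
      then show ?thesis using op_ok_transfer[of w ?w y] ag[OF y] ok unfolding okall_def by auto
    qed
  qed
  have rS: "res w ?S = v"
  proof (rule nth_equalityI)
    show "length (res w ?S) = length v" using r by (metis length_apply length_res)
    fix k assume "k < length (res w ?S)"
    then have k: "k < length w" by simp
    have vk: "v ! k = val ?w S' k" using r k by (metis length_apply nth_res)
    show "res w ?S ! k = v ! k"
    proof (cases "k = i \<or> k = Suc i")
      case True
      have u: "\<forall>y\<in>S'. k \<notin> modified y" using unc True by blast
      have "v!k = ?w!k" using vk val_unc[OF u] by simp
      moreover have "res w ?S ! k = val w ?S k" using k by (simp add: nth_res)
      ultimately show ?thesis using True dS si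
        by (auto simp: val_Swp1 val_Swp2)
    next
      case nk: False
      show ?thesis
      proof (cases "\<exists>y\<in>S'. k \<in> modified y")
        case True
        then obtain y where y: "y \<in> S'" "k \<in> modified y" by blast
        have "val w ?S k = val ?w S' k"
          using val_transfer[of y ?S S' k w ?w] y dS d ag[OF y(1)] by blast
        then show ?thesis using vk k by (simp add: nth_res)
      next
        case False
        have u1: "\<forall>y\<in>S'. k \<notin> modified y" using False by blast
        have u2: "\<forall>y\<in>?S. k \<notin> modified y" using False nk by auto
        have "?w ! k = w ! k" using nk apply_unmod[of k ?x w] by simp
        then show ?thesis using vk k val_unc[OF u1] val_unc[OF u2] by (simp add: nth_res)
      qed
    qed
  qed
  have "plan w ?S v" unfolding plan_def using fin dS okS rS by blast
  moreover have "card ?S \<le> card S' + 1" using fin by (simp add: card_insert_if)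
  ultimately show ?thesis by blast
qed

lemma B2:
  assumes okx: "op_ok w (Swp i)" and p: "plan (apply_op w (Swp i)) S' v"
    and nsw: "Swp i \<notin> S'" and cov: "\<exists>y\<in>S'. modified y \<inter> {i, Suc i} \<noteq> {}"
  shows "\<exists>S. plan w S v \<and> card S \<le> card S' + 1"
proof -
  let ?x = "Swp i"
  let ?w = "apply_op w ?x"
  define I where "I = {y\<in>S'. modified y \<inter> {i, Suc i} \<noteq> {}}"
  define T where "T = {i, Suc i} \<union> \<Union>(modified ` I)"
  have fin: "finite S'" and d: "djs S'" and ok: "okall ?w S'" and r: "res ?w S' = v"
    using p unfolding plan_def by auto
  have si: "Suc i < length w" and ne: "w!i \<noteq> w!Suc i" using okx by auto
  have finI: "finite I" using fin unfolding I_def by simp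
  have fT: "finite T" using finI unfolding T_def by simp
  have clos: "\<forall>z\<in>S'. modified z \<inter> T = {} \<or> modified z \<subseteq> T"
  proof
    fix z assume z: "z \<in> S'"
    show "modified z \<inter> T = {} \<or> modified z \<subseteq> T"
    proof (cases "z \<in> I")
      case True
      then have "modified z \<subseteq> T" unfolding T_def by blast
      then show ?thesis by blast
    next
      case False
      then have z0: "modified z \<inter> {i, Suc i} = {}" using z unfolding I_def by blast
      have "\<forall>y\<in>I. modified z \<inter> modified y = {}"
      proof
        fix y assume y: "y \<in> I"
        then have "y \<in> S'" "z \<noteq> y" using False unfolding I_def by auto
        then show "modified z \<inter> modified y = {}" using d z unfolding djs_def by blast
      qed
      then have "modified z \<inter> T = {}" using z0 unfolding T_def by blast
      then show ?thesis by blast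
    qed
  qed
  have Tb: "\<forall>k\<in>T. k < length w"
  proof
    fix k assume "k \<in> T"
    then consider "k = i \<or> k = Suc i" | y where "y \<in> I" "k \<in> modified y" unfolding T_def by blast
    then show "k < length w"
    proof cases
      case 1 then show ?thesis using si by auto
    next
      case 2
      then have "op_ok ?w y" using ok unfolding okall_def I_def by blast
      then show ?thesis using mod_bound 2 by fastforce
    qed
  qed
  have agree: "\<forall>k. k \<notin> T \<longrightarrow> w!k = ?w!k"
  proof (intro allI impI)
    fix k assume "k \<notin> T"
    then have "k \<notin> modified ?x" unfolding T_def by auto
    then show "w!k = ?w!k" using apply_unmod[of k ?x w] by simp
  qed
  have pl: "plan w ({z\<in>S'. modified z \<inter> T = {}} \<union> Rep ` {k\<in>T. v!k \<noteq> w!k}) v"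
    by (rule patch[OF p _ fT Tb agree clos]) simp
  obtain y0 where y0: "y0 \<in> S'" "modified y0 \<inter> {i, Suc i} \<noteq> {}" using cov by blast
  have "modified y0 \<inter> T \<noteq> {}" using y0 unfolding T_def by blast
  then have c1: "card {z\<in>S'. modified z \<inter> T = {}} < card S'"
    using card_filter_less[OF fin y0(1)] by blast
  define a1 where "a1 = (if 0 < i \<and> Swp (i-1) \<in> S' then i - 1 else i)"
  define a2 where "a2 = (if Swp (Suc i) \<in> S' then Suc (Suc i) else Suc i)"
  have wi: "?w!i = w!Suc i" "?w!Suc i = w!i" using si by auto
  have vi: "v!i = w!i" if h: "0 < i" "Swp (i-1) \<in> S'"
  proof -
    have s1: "Suc (i-1) = i" using h by simp
    have "v!i = val ?w S' i" using r si by (metis Suc_lessD length_apply nth_res)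
    also have "\<dots> = ?w!(i-1)" using val_Swp2[OF h(2) d, of ?w] s1 by simp
    also have "\<dots> = w!(i-1)" using apply_unmod[of "i-1" ?x w] h by simp
    finally have v1: "v!i = w!(i-1)" .
    have "op_ok ?w (Swp (i-1))" using ok h unfolding okall_def by blast
    then have "?w!(i-1) \<noteq> ?w!i" using s1 by simp
    then have "w!(i-1) \<noteq> w!Suc i" using wi apply_unmod[of "i-1" ?x w] h by simp
    then show ?thesis using v1 ne by blast
  qed
  have vsi: "v!(Suc i) = w!(Suc i)" if h: "Swp (Suc i) \<in> S'"
  proof -
    have "v!Suc i = val ?w S' (Suc i)" using r si by (metis length_apply nth_res)
    also have "\<dots> = ?w!(Suc (Suc i))" using val_Swp1[OF h d, of ?w] by simp
    also have "\<dots> = w!(Suc (Suc i))" using apply_unmod[of "Suc (Suc i)" ?x w] by simp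
    finally have v1: "v!Suc i = w!(Suc (Suc i))" .
    have "op_ok ?w (Swp (Suc i))" using ok h unfolding okall_def by blast
    then have "?w!(Suc i) \<noteq> ?w!(Suc (Suc i))" by simp
    then have "w!i \<noteq> w!(Suc (Suc i))" using wi apply_unmod[of "Suc (Suc i)" ?x w] by simp
    then show ?thesis using v1 ne by blast
  qed
  have sub: "{k\<in>T. v!k \<noteq> w!k} \<subseteq> {a1, a2}"
  proof
    fix k assume "k \<in> {k\<in>T. v!k \<noteq> w!k}"
    then have kT: "k \<in> T" and dk: "v!k \<noteq> w!k" by auto
    show "k \<in> {a1, a2}"
    proof (cases "k = i")
      case True
      then show ?thesis using vi dk unfolding a1_def by auto
    next
      case ni: False
      show ?thesis
      proof (cases "k = Suc i")
        case True
        then show ?thesis using vsi dk unfolding a2_def by auto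
      next
        case nsi: False
        then obtain y where y: "y \<in> I" "k \<in> modified y" using kT ni unfolding T_def by blast
        have yS: "y \<in> S'" and ym: "modified y \<inter> {i, Suc i} \<noteq> {}" using y unfolding I_def by auto
        show ?thesis
        proof (cases y)
          case (Rep j)
          then show ?thesis using y(2) ym ni nsi by auto
        next
          case (Swp j)
          have "j \<noteq> i" using Swp yS nsw by blast
          then have "(j = Suc i \<and> k = Suc (Suc i)) \<or> (Suc j = i \<and> k = j)"
            using Swp y(2) ym ni nsi by auto
          then show ?thesis
          proof
            assume "j = Suc i \<and> k = Suc (Suc i)"
            then show ?thesis using Swp yS unfolding a2_def by auto
          next
            assume h: "Suc j = i \<and> k = j"
            then have "0 < i" "Swp (i-1) \<in> S'" using Swp yS by auto
            then show ?thesis using h unfolding a1_def by auto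
          qed
        qed
      qed
    qed
  qed
  have c2: "card {k\<in>T. v!k \<noteq> w!k} \<le> 2"
  proof -
    have "card {k\<in>T. v!k \<noteq> w!k} \<le> card {a1, a2}" by (rule card_mono[OF _ sub]) simp
    also have "\<dots> \<le> 2" by (simp add: card_insert_if)
    finally show ?thesis .
  qed
  have "card ({z\<in>S'. modified z \<inter> T = {}} \<union> Rep ` {k\<in>T. v!k \<noteq> w!k}) \<le> card S' + 1"
    using patch_card[OF fin fT, of v w] c1 c2 by linarith
  then show ?thesis using pl by blast
qed

lemma N_step:
  assumes okx: "op_ok w x" and p: "plan (apply_op w x) S' v"
  shows "\<exists>S. plan w S v \<and> card S \<le> card S' + 1"
proof (cases x)
  case (Rep i)
  show ?thesis
  proof (cases "\<exists>y\<in>S'. i \<in> modified y")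
    case True
    then obtain y where "y \<in> S'" "i \<in> modified y" by blast
    then show ?thesis using G1[OF okx p] Rep by auto
  next
    case False
    then show ?thesis using G2 okx p Rep by blast
  qed
next
  case (Swp i)
  show ?thesis
  proof (cases "Swp i \<in> S'")
    case True
    then show ?thesis using G1[OF okx p True] Swp by auto
  next
    case nsw: False
    show ?thesis
    proof (cases "\<exists>y\<in>S'. modified y \<inter> {i, Suc i} \<noteq> {}")
      case True
      then show ?thesis using B2 okx p nsw Swp by blast
    next
      case False
      then show ?thesis using B0 okx p Swp by blast
    qed
  qed
qed

lemma run_ne: "run w os \<noteq> []"
  by (cases os) auto

lemma N_lemma:
  "transforms w os v \<Longrightarrow> \<exists>S. plan w S v \<and> card S \<le> length os"
proof (induction os arbitrary: w)
  case Nil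
  then have "v = w" unfolding transforms_def by simp
  then have "plan w {} v" unfolding plan_def djs_def okall_def by simp
  then show ?case by force
next
  case (Cons x os)
  then have ok: "op_ok w x" and t: "transforms (apply_op w x) os v"
    unfolding transforms_def using run_ne by (auto simp: last_ConsR)
  obtain S' where S': "plan (apply_op w x) S' v" "card S' \<le> length os" using Cons.IH[OF t] by blast
  obtain S where "plan w S v" "card S \<le> card S' + 1" using N_step[OF ok S'(1)] by blast
  then show ?case using S'(2) by force
qed

definition occF :: "(nat \<Rightarrow> bool) \<Rightarrow> nat \<Rightarrow> bool" where
  "occF g a \<longleftrightarrow> g a \<and> g (a+1) \<and> g (a+2) \<and> \<not> g (a+3) \<and> \<not> g (a+4) \<and> \<not> g (a+5)"

lemma loc_SS_8:
  fixes X Y :: "nat \<Rightarrow> bool" and a b c :: nat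
  assumes "X 1 = Y 1"
    "X 2 = Y 2"
    "X 3 = Y 3"
    "X 4 = Y 4"
    "X 5 = Y 5"
    "X 6 \<noteq> X 7"
    "Y 6 = X 7"
    "Y 7 = X 6"
    "X 8 \<noteq> X 9"
    "Y 8 = X 9"
    "Y 9 = X 8"
    "occF (\<lambda>k. if k = 6 \<or> k = 7 then Y k else X k) a"
    "occF (\<lambda>k. if k = 6 \<or> k = 7 then X k else Y k) b"
    "a \<le> 7"
    "8 \<le> a + 5"
    "b \<le> 7"
    "8 \<le> b + 5"
    "occF (\<lambda>k. if k = 8 \<or> k = 9 then Y k else X k) c"
    "c \<le> 9"
    "8 \<le> c + 5"
  shows False
proof -
  have da: "a = 3 \<or> a = 4 \<or> a = 5 \<or> a = 6 \<or> a = 7" using assms(14) assms(15) by arith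
  have db: "b = 3 \<or> b = 4 \<or> b = 5 \<or> b = 6 \<or> b = 7" using assms(16) assms(17) by arith
  show False using assms da db unfolding occF_def by ((elim disjE)?; simp)
qed

lemma loc_SS_9:
  fixes X Y :: "nat \<Rightarrow> bool" and a b c :: nat
  assumes "X 1 = Y 1"
    "X 2 = Y 2"
    "X 3 = Y 3"
    "X 4 = Y 4"
    "X 5 = Y 5"
    "X 6 \<noteq> X 7"
    "Y 6 = X 7"
    "Y 7 = X 6"
    "X 8 = Y 8"
    "X 9 \<noteq> X 10"
    "Y 9 = X 10"
    "Y 10 = X 9"
    "occF (\<lambda>k. if k = 6 \<or> k = 7 then Y k else X k) a"
    "occF (\<lambda>k. if k = 6 \<or> k = 7 then X k else Y k) b"
    "a \<le> 7"
    "9 \<le> a + 5"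
    "b \<le> 7"
    "9 \<le> b + 5"
    "occF (\<lambda>k. if k = 9 \<or> k = 10 then Y k else X k) c"
    "c \<le> 10"
    "9 \<le> c + 5"
  shows False
proof -
  have da: "a = 4 \<or> a = 5 \<or> a = 6 \<or> a = 7" using assms(15) assms(16) by arith
  have db: "b = 4 \<or> b = 5 \<or> b = 6 \<or> b = 7" using assms(17) assms(18) by arith
  show False using assms da db unfolding occF_def by ((elim disjE)?; simp)
qed

lemma loc_SS_10:
  fixes X Y :: "nat \<Rightarrow> bool" and a b c :: nat
  assumes "X 1 = Y 1"
    "X 2 = Y 2"
    "X 3 = Y 3"
    "X 4 = Y 4"
    "X 5 = Y 5"
    "X 6 \<noteq> X 7"
    "Y 6 = X 7"
    "Y 7 = X 6"
    "X 8 = Y 8"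
    "X 9 = Y 9"
    "X 10 \<noteq> X 11"
    "Y 10 = X 11"
    "Y 11 = X 10"
    "occF (\<lambda>k. if k = 6 \<or> k = 7 then Y k else X k) a"
    "occF (\<lambda>k. if k = 6 \<or> k = 7 then X k else Y k) b"
    "a \<le> 7"
    "10 \<le> a + 5"
    "b \<le> 7"
    "10 \<le> b + 5"
    "occF (\<lambda>k. if k = 10 \<or> k = 11 then Y k else X k) c"
    "c \<le> 11"
    "10 \<le> c + 5"
  shows False
proof -
  have da: "a = 5 \<or> a = 6 \<or> a = 7" using assms(16) assms(17) by arith
  have db: "b = 5 \<or> b = 6 \<or> b = 7" using assms(18) assms(19) by arith
  show False using assms da db unfolding occF_def by ((elim disjE)?; simp)
qed

lemma loc_SS_11:
  fixes X Y :: "nat \<Rightarrow> bool" and a b c :: nat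
  assumes "X 1 = Y 1"
    "X 2 = Y 2"
    "X 3 = Y 3"
    "X 4 = Y 4"
    "X 5 = Y 5"
    "X 6 \<noteq> X 7"
    "Y 6 = X 7"
    "Y 7 = X 6"
    "X 8 = Y 8"
    "X 9 = Y 9"
    "X 10 = Y 10"
    "X 11 \<noteq> X 12"
    "Y 11 = X 12"
    "Y 12 = X 11"
    "occF (\<lambda>k. if k = 6 \<or> k = 7 then Y k else X k) a"
    "occF (\<lambda>k. if k = 6 \<or> k = 7 then X k else Y k) b"
    "a \<le> 7"
    "11 \<le> a + 5"
    "b \<le> 7"
    "11 \<le> b + 5"
    "occF (\<lambda>k. if k = 11 \<or> k = 12 then Y k else X k) c"
    "c \<le> 12"
    "11 \<le> c + 5"
  shows False
proof -
  have da: "a = 6 \<or> a = 7" using assms(17) assms(18) by arith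
  have db: "b = 6 \<or> b = 7" using assms(19) assms(20) by arith
  show False using assms da db unfolding occF_def by ((elim disjE)?; simp)
qed

lemma loc_SS_12:
  fixes X Y :: "nat \<Rightarrow> bool" and a b c :: nat
  assumes "X 1 = Y 1"
    "X 2 = Y 2"
    "X 3 = Y 3"
    "X 4 = Y 4"
    "X 5 = Y 5"
    "X 6 \<noteq> X 7"
    "Y 6 = X 7"
    "Y 7 = X 6"
    "X 8 = Y 8"
    "X 9 = Y 9"
    "X 10 = Y 10"
    "X 11 = Y 11"
    "X 12 \<noteq> X 13"
    "Y 12 = X 13"
    "Y 13 = X 12"
    "occF (\<lambda>k. if k = 6 \<or> k = 7 then Y k else X k) a"
    "occF (\<lambda>k. if k = 6 \<or> k = 7 then X k else Y k) b"
    "a \<le> 7"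
    "12 \<le> a + 5"
    "b \<le> 7"
    "12 \<le> b + 5"
    "occF (\<lambda>k. if k = 12 \<or> k = 13 then Y k else X k) c"
    "c \<le> 13"
    "12 \<le> c + 5"
  shows False
proof -
  have da: "a = 7" using assms(18) assms(19) by arith
  have db: "b = 7" using assms(20) assms(21) by arith
  show False using assms da db unfolding occF_def by ((elim disjE)?; simp)
qed

lemma loc_SR_8:
  fixes X Y :: "nat \<Rightarrow> bool" and a b c :: nat
  assumes "X 1 = Y 1"
    "X 2 = Y 2"
    "X 3 = Y 3"
    "X 4 = Y 4"
    "X 5 = Y 5"
    "X 6 \<noteq> X 7"
    "Y 6 = X 7"
    "Y 7 = X 6"
    "Y 8 \<noteq> X 8"
    "occF (\<lambda>k. if k = 6 \<or> k = 7 then Y k else X k) a"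
    "occF (\<lambda>k. if k = 6 \<or> k = 7 then X k else Y k) b"
    "a \<le> 7"
    "8 \<le> a + 5"
    "b \<le> 7"
    "8 \<le> b + 5"
    "occF (\<lambda>k. if k = 8 then Y k else X k) c"
    "c \<le> 8"
    "8 \<le> c + 5"
  shows False
proof -
  have da: "a = 3 \<or> a = 4 \<or> a = 5 \<or> a = 6 \<or> a = 7" using assms(12) assms(13) by arith
  have db: "b = 3 \<or> b = 4 \<or> b = 5 \<or> b = 6 \<or> b = 7" using assms(14) assms(15) by arith
  have dc: "c = 3 \<or> c = 4 \<or> c = 5 \<or> c = 6 \<or> c = 7 \<or> c = 8" using assms(17) assms(18) by arith
  have ab: "(a = 4 \<and> b = 7) \<or> (a = 7 \<and> b = 4)" using assms da db unfolding occF_def by ((elim disjE)?; simp)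
  show False using assms ab dc unfolding occF_def by ((elim disjE conjE)?; simp)
qed

lemma loc_SR_9:
  fixes X Y :: "nat \<Rightarrow> bool" and a b c :: nat
  assumes "X 1 = Y 1"
    "X 2 = Y 2"
    "X 3 = Y 3"
    "X 4 = Y 4"
    "X 5 = Y 5"
    "X 6 \<noteq> X 7"
    "Y 6 = X 7"
    "Y 7 = X 6"
    "X 8 = Y 8"
    "Y 9 \<noteq> X 9"
    "occF (\<lambda>k. if k = 6 \<or> k = 7 then Y k else X k) a"
    "occF (\<lambda>k. if k = 6 \<or> k = 7 then X k else Y k) b"
    "a \<le> 7"
    "9 \<le> a + 5"
    "b \<le> 7"
    "9 \<le> b + 5"
    "occF (\<lambda>k. if k = 9 then Y k else X k) c"
    "c \<le> 9"
    "9 \<le> c + 5"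
  shows False
proof -
  have da: "a = 4 \<or> a = 5 \<or> a = 6 \<or> a = 7" using assms(13) assms(14) by arith
  have db: "b = 4 \<or> b = 5 \<or> b = 6 \<or> b = 7" using assms(15) assms(16) by arith
  show False using assms da db unfolding occF_def by ((elim disjE)?; simp)
qed

lemma loc_SR_10:
  fixes X Y :: "nat \<Rightarrow> bool" and a b c :: nat
  assumes "X 1 = Y 1"
    "X 2 = Y 2"
    "X 3 = Y 3"
    "X 4 = Y 4"
    "X 5 = Y 5"
    "X 6 \<noteq> X 7"
    "Y 6 = X 7"
    "Y 7 = X 6"
    "X 8 = Y 8"
    "X 9 = Y 9"
    "Y 10 \<noteq> X 10"
    "occF (\<lambda>k. if k = 6 \<or> k = 7 then Y k else X k) a"
    "occF (\<lambda>k. if k = 6 \<or> k = 7 then X k else Y k) b"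
    "a \<le> 7"
    "10 \<le> a + 5"
    "b \<le> 7"
    "10 \<le> b + 5"
    "occF (\<lambda>k. if k = 10 then Y k else X k) c"
    "c \<le> 10"
    "10 \<le> c + 5"
  shows False
proof -
  have da: "a = 5 \<or> a = 6 \<or> a = 7" using assms(14) assms(15) by arith
  have db: "b = 5 \<or> b = 6 \<or> b = 7" using assms(16) assms(17) by arith
  show False using assms da db unfolding occF_def by ((elim disjE)?; simp)
qed

lemma loc_SR_11:
  fixes X Y :: "nat \<Rightarrow> bool" and a b c :: nat
  assumes "X 1 = Y 1"
    "X 2 = Y 2"
    "X 3 = Y 3"
    "X 4 = Y 4"
    "X 5 = Y 5"
    "X 6 \<noteq> X 7"
    "Y 6 = X 7"
    "Y 7 = X 6"
    "X 8 = Y 8"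
    "X 9 = Y 9"
    "X 10 = Y 10"
    "Y 11 \<noteq> X 11"
    "occF (\<lambda>k. if k = 6 \<or> k = 7 then Y k else X k) a"
    "occF (\<lambda>k. if k = 6 \<or> k = 7 then X k else Y k) b"
    "a \<le> 7"
    "11 \<le> a + 5"
    "b \<le> 7"
    "11 \<le> b + 5"
    "occF (\<lambda>k. if k = 11 then Y k else X k) c"
    "c \<le> 11"
    "11 \<le> c + 5"
  shows False
proof -
  have da: "a = 6 \<or> a = 7" using assms(15) assms(16) by arith
  have db: "b = 6 \<or> b = 7" using assms(17) assms(18) by arith
  show False using assms da db unfolding occF_def by ((elim disjE)?; simp)
qed

lemma loc_SR_12:
  fixes X Y :: "nat \<Rightarrow> bool" and a b c :: nat
  assumes "X 1 = Y 1"
    "X 2 = Y 2"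
    "X 3 = Y 3"
    "X 4 = Y 4"
    "X 5 = Y 5"
    "X 6 \<noteq> X 7"
    "Y 6 = X 7"
    "Y 7 = X 6"
    "X 8 = Y 8"
    "X 9 = Y 9"
    "X 10 = Y 10"
    "X 11 = Y 11"
    "Y 12 \<noteq> X 12"
    "occF (\<lambda>k. if k = 6 \<or> k = 7 then Y k else X k) a"
    "occF (\<lambda>k. if k = 6 \<or> k = 7 then X k else Y k) b"
    "a \<le> 7"
    "12 \<le> a + 5"
    "b \<le> 7"
    "12 \<le> b + 5"
    "occF (\<lambda>k. if k = 12 then Y k else X k) c"
    "c \<le> 12"
    "12 \<le> c + 5"
  shows False
proof -
  have da: "a = 7" using assms(16) assms(17) by arith
  have db: "b = 7" using assms(18) assms(19) by arith
  show False using assms da db unfolding occF_def by ((elim disjE)?; simp)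
qed

lemma loc_RS_7:
  fixes X Y :: "nat \<Rightarrow> bool" and a b c :: nat
  assumes "X 1 = Y 1"
    "X 2 = Y 2"
    "X 3 = Y 3"
    "X 4 = Y 4"
    "X 5 = Y 5"
    "Y 6 \<noteq> X 6"
    "X 7 \<noteq> X 8"
    "Y 7 = X 8"
    "Y 8 = X 7"
    "occF (\<lambda>k. if k = 6 then Y k else X k) a"
    "occF (\<lambda>k. if k = 6 then X k else Y k) b"
    "a \<le> 6"
    "7 \<le> a + 5"
    "b \<le> 6"
    "7 \<le> b + 5"
    "occF (\<lambda>k. if k = 7 \<or> k = 8 then Y k else X k) c"
    "c \<le> 8"
    "7 \<le> c + 5"
  shows False
proof -
  have da: "a = 2 \<or> a = 3 \<or> a = 4 \<or> a = 5 \<or> a = 6" using assms(12) assms(13) by arith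
  have db: "b = 2 \<or> b = 3 \<or> b = 4 \<or> b = 5 \<or> b = 6" using assms(14) assms(15) by arith
  show False using assms da db unfolding occF_def by ((elim disjE)?; simp)
qed

lemma loc_RS_8:
  fixes X Y :: "nat \<Rightarrow> bool" and a b c :: nat
  assumes "X 1 = Y 1"
    "X 2 = Y 2"
    "X 3 = Y 3"
    "X 4 = Y 4"
    "X 5 = Y 5"
    "Y 6 \<noteq> X 6"
    "X 7 = Y 7"
    "X 8 \<noteq> X 9"
    "Y 8 = X 9"
    "Y 9 = X 8"
    "occF (\<lambda>k. if k = 6 then Y k else X k) a"
    "occF (\<lambda>k. if k = 6 then X k else Y k) b"
    "a \<le> 6"
    "8 \<le> a + 5"
    "b \<le> 6"
    "8 \<le> b + 5"
    "occF (\<lambda>k. if k = 8 \<or> k = 9 then Y k else X k) c"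
    "c \<le> 9"
    "8 \<le> c + 5"
  shows False
proof -
  have da: "a = 3 \<or> a = 4 \<or> a = 5 \<or> a = 6" using assms(13) assms(14) by arith
  have db: "b = 3 \<or> b = 4 \<or> b = 5 \<or> b = 6" using assms(15) assms(16) by arith
  show False using assms da db unfolding occF_def by ((elim disjE)?; simp)
qed

lemma loc_RS_9:
  fixes X Y :: "nat \<Rightarrow> bool" and a b c :: nat
  assumes "X 1 = Y 1"
    "X 2 = Y 2"
    "X 3 = Y 3"
    "X 4 = Y 4"
    "X 5 = Y 5"
    "Y 6 \<noteq> X 6"
    "X 7 = Y 7"
    "X 8 = Y 8"
    "X 9 \<noteq> X 10"
    "Y 9 = X 10"
    "Y 10 = X 9"
    "occF (\<lambda>k. if k = 6 then Y k else X k) a"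
    "occF (\<lambda>k. if k = 6 then X k else Y k) b"
    "a \<le> 6"
    "9 \<le> a + 5"
    "b \<le> 6"
    "9 \<le> b + 5"
    "occF (\<lambda>k. if k = 9 \<or> k = 10 then Y k else X k) c"
    "c \<le> 10"
    "9 \<le> c + 5"
  shows False
proof -
  have da: "a = 4 \<or> a = 5 \<or> a = 6" using assms(14) assms(15) by arith
  have db: "b = 4 \<or> b = 5 \<or> b = 6" using assms(16) assms(17) by arith
  show False using assms da db unfolding occF_def by ((elim disjE)?; simp)
qed

lemma loc_RS_10:
  fixes X Y :: "nat \<Rightarrow> bool" and a b c :: nat
  assumes "X 1 = Y 1"
    "X 2 = Y 2"
    "X 3 = Y 3"
    "X 4 = Y 4"
    "X 5 = Y 5"
    "Y 6 \<noteq> X 6"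
    "X 7 = Y 7"
    "X 8 = Y 8"
    "X 9 = Y 9"
    "X 10 \<noteq> X 11"
    "Y 10 = X 11"
    "Y 11 = X 10"
    "occF (\<lambda>k. if k = 6 then Y k else X k) a"
    "occF (\<lambda>k. if k = 6 then X k else Y k) b"
    "a \<le> 6"
    "10 \<le> a + 5"
    "b \<le> 6"
    "10 \<le> b + 5"
    "occF (\<lambda>k. if k = 10 \<or> k = 11 then Y k else X k) c"
    "c \<le> 11"
    "10 \<le> c + 5"
  shows False
proof -
  have da: "a = 5 \<or> a = 6" using assms(15) assms(16) by arith
  have db: "b = 5 \<or> b = 6" using assms(17) assms(18) by arith
  show False using assms da db unfolding occF_def by ((elim disjE)?; simp)
qed

lemma loc_RS_11:
  fixes X Y :: "nat \<Rightarrow> bool" and a b c :: nat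
  assumes "X 1 = Y 1"
    "X 2 = Y 2"
    "X 3 = Y 3"
    "X 4 = Y 4"
    "X 5 = Y 5"
    "Y 6 \<noteq> X 6"
    "X 7 = Y 7"
    "X 8 = Y 8"
    "X 9 = Y 9"
    "X 10 = Y 10"
    "X 11 \<noteq> X 12"
    "Y 11 = X 12"
    "Y 12 = X 11"
    "occF (\<lambda>k. if k = 6 then Y k else X k) a"
    "occF (\<lambda>k. if k = 6 then X k else Y k) b"
    "a \<le> 6"
    "11 \<le> a + 5"
    "b \<le> 6"
    "11 \<le> b + 5"
    "occF (\<lambda>k. if k = 11 \<or> k = 12 then Y k else X k) c"
    "c \<le> 12"
    "11 \<le> c + 5"
  shows False
proof -
  have da: "a = 6" using assms(16) assms(17) by arith
  have db: "b = 6" using assms(18) assms(19) by arith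
  show False using assms da db unfolding occF_def by ((elim disjE)?; simp)
qed

lemma loc_RR_7:
  fixes X Y :: "nat \<Rightarrow> bool" and a b c :: nat
  assumes "X 1 = Y 1"
    "X 2 = Y 2"
    "X 3 = Y 3"
    "X 4 = Y 4"
    "X 5 = Y 5"
    "Y 6 \<noteq> X 6"
    "Y 7 \<noteq> X 7"
    "X 6 = X 7"
    "occF (\<lambda>k. if k = 6 then Y k else X k) a"
    "occF (\<lambda>k. if k = 6 then X k else Y k) b"
    "a \<le> 6"
    "7 \<le> a + 5"
    "b \<le> 6"
    "7 \<le> b + 5"
    "occF (\<lambda>k. if k = 7 then Y k else X k) c"
    "c \<le> 7"
    "7 \<le> c + 5"
  shows False
proof -
  have da: "a = 2 \<or> a = 3 \<or> a = 4 \<or> a = 5 \<or> a = 6" using assms(11) assms(12) by arith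
  have db: "b = 2 \<or> b = 3 \<or> b = 4 \<or> b = 5 \<or> b = 6" using assms(13) assms(14) by arith
  show False using assms da db unfolding occF_def by ((elim disjE)?; simp)
qed

lemma loc_RR_8:
  fixes X Y :: "nat \<Rightarrow> bool" and a b c :: nat
  assumes "X 1 = Y 1"
    "X 2 = Y 2"
    "X 3 = Y 3"
    "X 4 = Y 4"
    "X 5 = Y 5"
    "Y 6 \<noteq> X 6"
    "X 7 = Y 7"
    "Y 8 \<noteq> X 8"
    "occF (\<lambda>k. if k = 6 then Y k else X k) a"
    "occF (\<lambda>k. if k = 6 then X k else Y k) b"
    "a \<le> 6"
    "8 \<le> a + 5"
    "b \<le> 6"
    "8 \<le> b + 5"
    "occF (\<lambda>k. if k = 8 then Y k else X k) c"
    "c \<le> 8"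
    "8 \<le> c + 5"
  shows False
proof -
  have da: "a = 3 \<or> a = 4 \<or> a = 5 \<or> a = 6" using assms(11) assms(12) by arith
  have db: "b = 3 \<or> b = 4 \<or> b = 5 \<or> b = 6" using assms(13) assms(14) by arith
  show False using assms da db unfolding occF_def by ((elim disjE)?; simp)
qed

lemma loc_RR_9:
  fixes X Y :: "nat \<Rightarrow> bool" and a b c :: nat
  assumes "X 1 = Y 1"
    "X 2 = Y 2"
    "X 3 = Y 3"
    "X 4 = Y 4"
    "X 5 = Y 5"
    "Y 6 \<noteq> X 6"
    "X 7 = Y 7"
    "X 8 = Y 8"
    "Y 9 \<noteq> X 9"
    "occF (\<lambda>k. if k = 6 then Y k else X k) a"
    "occF (\<lambda>k. if k = 6 then X k else Y k) b"
    "a \<le> 6"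
    "9 \<le> a + 5"
    "b \<le> 6"
    "9 \<le> b + 5"
    "occF (\<lambda>k. if k = 9 then Y k else X k) c"
    "c \<le> 9"
    "9 \<le> c + 5"
  shows False
proof -
  have da: "a = 4 \<or> a = 5 \<or> a = 6" using assms(12) assms(13) by arith
  have db: "b = 4 \<or> b = 5 \<or> b = 6" using assms(14) assms(15) by arith
  show False using assms da db unfolding occF_def by ((elim disjE)?; simp)
qed

lemma loc_RR_10:
  fixes X Y :: "nat \<Rightarrow> bool" and a b c :: nat
  assumes "X 1 = Y 1"
    "X 2 = Y 2"
    "X 3 = Y 3"
    "X 4 = Y 4"
    "X 5 = Y 5"
    "Y 6 \<noteq> X 6"
    "X 7 = Y 7"
    "X 8 = Y 8"
    "X 9 = Y 9"
    "Y 10 \<noteq> X 10"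
    "occF (\<lambda>k. if k = 6 then Y k else X k) a"
    "occF (\<lambda>k. if k = 6 then X k else Y k) b"
    "a \<le> 6"
    "10 \<le> a + 5"
    "b \<le> 6"
    "10 \<le> b + 5"
    "occF (\<lambda>k. if k = 10 then Y k else X k) c"
    "c \<le> 10"
    "10 \<le> c + 5"
  shows False
proof -
  have da: "a = 5 \<or> a = 6" using assms(13) assms(14) by arith
  have db: "b = 5 \<or> b = 6" using assms(15) assms(16) by arith
  show False using assms da db unfolding occF_def by ((elim disjE)?; simp)
qed

lemma loc_RR_11:
  fixes X Y :: "nat \<Rightarrow> bool" and a b c :: nat
  assumes "X 1 = Y 1"
    "X 2 = Y 2"
    "X 3 = Y 3"
    "X 4 = Y 4"
    "X 5 = Y 5"
    "Y 6 \<noteq> X 6"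
    "X 7 = Y 7"
    "X 8 = Y 8"
    "X 9 = Y 9"
    "X 10 = Y 10"
    "Y 11 \<noteq> X 11"
    "occF (\<lambda>k. if k = 6 then Y k else X k) a"
    "occF (\<lambda>k. if k = 6 then X k else Y k) b"
    "a \<le> 6"
    "11 \<le> a + 5"
    "b \<le> 6"
    "11 \<le> b + 5"
    "occF (\<lambda>k. if k = 11 then Y k else X k) c"
    "c \<le> 11"
    "11 \<le> c + 5"
  shows False
proof -
  have da: "a = 6" using assms(14) assms(15) by arith
  have db: "b = 6" using assms(16) assms(17) by arith
  show False using assms da db unfolding occF_def by ((elim disjE)?; simp)
qed

lemma local_core:
  fixes X Y :: "nat \<Rightarrow> bool" and sw1 sw2 :: bool and q a b c :: nat
  assumes h0: "\<forall>k<6. X k = Y k"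
  and h1: "if sw1 then X 6 \<noteq> X 7 \<and> Y 6 = X 7 \<and> Y 7 = X 6 else Y 6 \<noteq> X 6"
  and h2: "\<forall>k. (if sw1 then 7 else 6) < k \<and> k < q \<longrightarrow> X k = Y k"
  and h3: "(if sw1 then 7 else 6) < q"
  and h4: "if sw2 then X q \<noteq> X (q+1) \<and> Y q = X (q+1) \<and> Y (q+1) = X q else Y q \<noteq> X q"
  and h5: "\<not>sw1 \<and> \<not>sw2 \<and> q = 7 \<longrightarrow> X 6 = X 7"
  and ha: "a \<le> (if sw1 then 7 else 6)" "q \<le> a + 5"
  and hA: "occF (\<lambda>k. if k = 6 \<or> (sw1 \<and> k = 7) then Y k else X k) a"
  and hb: "b \<le> (if sw1 then 7 else 6)" "q \<le> b + 5"
  and hB: "occF (\<lambda>k. if k = 6 \<or> (sw1 \<and> k = 7) then X k else Y k) b"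
  and hc: "c \<le> (if sw2 then q+1 else q)" "q \<le> c + 5"
  and hC: "occF (\<lambda>k. if k = q \<or> (sw2 \<and> k = q+1) then Y k else X k) c"
  shows False
proof -
  have l: "X 1 = Y 1" "X 2 = Y 2" "X 3 = Y 3" "X 4 = Y 4" "X 5 = Y 5" using h0 by auto
  have m: "\<And>k. (if sw1 then 7 else 6) < k \<Longrightarrow> k < q \<Longrightarrow> X k = Y k" using h2 by auto
  { assume T1: "sw1"
    { assume T2: "sw2"
      { assume qq: "q = 8"
        have s1: "X 6 \<noteq> X 7" "Y 6 = X 7" "Y 7 = X 6" using h1 T1 by auto
        have s2: "X 8 \<noteq> X 9" "Y 8 = X 9" "Y 9 = X 8" using h4 T2 qq by auto
        have A1: "occF (\<lambda>k. if k = 6 \<or> k = 7 then Y k else X k) a" using hA T1 by simp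
        have B1: "occF (\<lambda>k. if k = 6 \<or> k = 7 then X k else Y k) b" using hB T1 by simp
        have C1: "occF (\<lambda>k. if k = 8 \<or> k = 9 then Y k else X k) c" using hC T2 qq by simp
        have r: "a \<le> 7" "8 \<le> a + 5" "b \<le> 7" "8 \<le> b + 5" "c \<le> 9" "8 \<le> c + 5" using ha hb hc T1 T2 qq by auto
        have False by (rule loc_SS_8[OF l(1) l(2) l(3) l(4) l(5) s1(1) s1(2) s1(3) s2(1) s2(2) s2(3) A1 B1 r(1) r(2) r(3) r(4) C1 r(5) r(6)])
      }
      moreover
      { assume qq: "q = 9"
        have s1: "X 6 \<noteq> X 7" "Y 6 = X 7" "Y 7 = X 6" using h1 T1 by auto
        have m8: "X 8 = Y 8" using m[of 8] qq T1 by simp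
        have s2: "X 9 \<noteq> X 10" "Y 9 = X 10" "Y 10 = X 9" using h4 T2 qq by auto
        have A1: "occF (\<lambda>k. if k = 6 \<or> k = 7 then Y k else X k) a" using hA T1 by simp
        have B1: "occF (\<lambda>k. if k = 6 \<or> k = 7 then X k else Y k) b" using hB T1 by simp
        have C1: "occF (\<lambda>k. if k = 9 \<or> k = 10 then Y k else X k) c" using hC T2 qq by simp
        have r: "a \<le> 7" "9 \<le> a + 5" "b \<le> 7" "9 \<le> b + 5" "c \<le> 10" "9 \<le> c + 5" using ha hb hc T1 T2 qq by auto
        have False by (rule loc_SS_9[OF l(1) l(2) l(3) l(4) l(5) s1(1) s1(2) s1(3) m8 s2(1) s2(2) s2(3) A1 B1 r(1) r(2) r(3) r(4) C1 r(5) r(6)])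
      }
      moreover
      { assume qq: "q = 10"
        have s1: "X 6 \<noteq> X 7" "Y 6 = X 7" "Y 7 = X 6" using h1 T1 by auto
        have m8: "X 8 = Y 8" using m[of 8] qq T1 by simp
        have m9: "X 9 = Y 9" using m[of 9] qq T1 by simp
        have s2: "X 10 \<noteq> X 11" "Y 10 = X 11" "Y 11 = X 10" using h4 T2 qq by auto
        have A1: "occF (\<lambda>k. if k = 6 \<or> k = 7 then Y k else X k) a" using hA T1 by simp
        have B1: "occF (\<lambda>k. if k = 6 \<or> k = 7 then X k else Y k) b" using hB T1 by simp
        have C1: "occF (\<lambda>k. if k = 10 \<or> k = 11 then Y k else X k) c" using hC T2 qq by simp
        have r: "a \<le> 7" "10 \<le> a + 5" "b \<le> 7" "10 \<le> b + 5" "c \<le> 11" "10 \<le> c + 5" using ha hb hc T1 T2 qq by auto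
        have False by (rule loc_SS_10[OF l(1) l(2) l(3) l(4) l(5) s1(1) s1(2) s1(3) m8 m9 s2(1) s2(2) s2(3) A1 B1 r(1) r(2) r(3) r(4) C1 r(5) r(6)])
      }
      moreover
      { assume qq: "q = 11"
        have s1: "X 6 \<noteq> X 7" "Y 6 = X 7" "Y 7 = X 6" using h1 T1 by auto
        have m8: "X 8 = Y 8" using m[of 8] qq T1 by simp
        have m9: "X 9 = Y 9" using m[of 9] qq T1 by simp
        have m10: "X 10 = Y 10" using m[of 10] qq T1 by simp
        have s2: "X 11 \<noteq> X 12" "Y 11 = X 12" "Y 12 = X 11" using h4 T2 qq by auto
        have A1: "occF (\<lambda>k. if k = 6 \<or> k = 7 then Y k else X k) a" using hA T1 by simp
        have B1: "occF (\<lambda>k. if k = 6 \<or> k = 7 then X k else Y k) b" using hB T1 by simp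
        have C1: "occF (\<lambda>k. if k = 11 \<or> k = 12 then Y k else X k) c" using hC T2 qq by simp
        have r: "a \<le> 7" "11 \<le> a + 5" "b \<le> 7" "11 \<le> b + 5" "c \<le> 12" "11 \<le> c + 5" using ha hb hc T1 T2 qq by auto
        have False by (rule loc_SS_11[OF l(1) l(2) l(3) l(4) l(5) s1(1) s1(2) s1(3) m8 m9 m10 s2(1) s2(2) s2(3) A1 B1 r(1) r(2) r(3) r(4) C1 r(5) r(6)])
      }
      moreover
      { assume qq: "q = 12"
        have s1: "X 6 \<noteq> X 7" "Y 6 = X 7" "Y 7 = X 6" using h1 T1 by auto
        have m8: "X 8 = Y 8" using m[of 8] qq T1 by simp
        have m9: "X 9 = Y 9" using m[of 9] qq T1 by simp
        have m10: "X 10 = Y 10" using m[of 10] qq T1 by simp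
        have m11: "X 11 = Y 11" using m[of 11] qq T1 by simp
        have s2: "X 12 \<noteq> X 13" "Y 12 = X 13" "Y 13 = X 12" using h4 T2 qq by auto
        have A1: "occF (\<lambda>k. if k = 6 \<or> k = 7 then Y k else X k) a" using hA T1 by simp
        have B1: "occF (\<lambda>k. if k = 6 \<or> k = 7 then X k else Y k) b" using hB T1 by simp
        have C1: "occF (\<lambda>k. if k = 12 \<or> k = 13 then Y k else X k) c" using hC T2 qq by simp
        have r: "a \<le> 7" "12 \<le> a + 5" "b \<le> 7" "12 \<le> b + 5" "c \<le> 13" "12 \<le> c + 5" using ha hb hc T1 T2 qq by auto
        have False by (rule loc_SS_12[OF l(1) l(2) l(3) l(4) l(5) s1(1) s1(2) s1(3) m8 m9 m10 m11 s2(1) s2(2) s2(3) A1 B1 r(1) r(2) r(3) r(4) C1 r(5) r(6)])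
      }
      moreover have "q = 8 \<or> q = 9 \<or> q = 10 \<or> q = 11 \<or> q = 12" using h3 ha T1 by auto
      ultimately have False by blast
    }
    moreover
    { assume T2: "\<not> sw2"
      { assume qq: "q = 8"
        have s1: "X 6 \<noteq> X 7" "Y 6 = X 7" "Y 7 = X 6" using h1 T1 by auto
        have s2: "Y 8 \<noteq> X 8" using h4 T2 qq by auto
        have A1: "occF (\<lambda>k. if k = 6 \<or> k = 7 then Y k else X k) a" using hA T1 by simp
        have B1: "occF (\<lambda>k. if k = 6 \<or> k = 7 then X k else Y k) b" using hB T1 by simp
        have C1: "occF (\<lambda>k. if k = 8 then Y k else X k) c" using hC T2 qq by simp
        have r: "a \<le> 7" "8 \<le> a + 5" "b \<le> 7" "8 \<le> b + 5" "c \<le> 8" "8 \<le> c + 5" using ha hb hc T1 T2 qq by auto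
        have False by (rule loc_SR_8[OF l(1) l(2) l(3) l(4) l(5) s1(1) s1(2) s1(3) s2 A1 B1 r(1) r(2) r(3) r(4) C1 r(5) r(6)])
      }
      moreover
      { assume qq: "q = 9"
        have s1: "X 6 \<noteq> X 7" "Y 6 = X 7" "Y 7 = X 6" using h1 T1 by auto
        have m8: "X 8 = Y 8" using m[of 8] qq T1 by simp
        have s2: "Y 9 \<noteq> X 9" using h4 T2 qq by auto
        have A1: "occF (\<lambda>k. if k = 6 \<or> k = 7 then Y k else X k) a" using hA T1 by simp
        have B1: "occF (\<lambda>k. if k = 6 \<or> k = 7 then X k else Y k) b" using hB T1 by simp
        have C1: "occF (\<lambda>k. if k = 9 then Y k else X k) c" using hC T2 qq by simp
        have r: "a \<le> 7" "9 \<le> a + 5" "b \<le> 7" "9 \<le> b + 5" "c \<le> 9" "9 \<le> c + 5" using ha hb hc T1 T2 qq by auto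
        have False by (rule loc_SR_9[OF l(1) l(2) l(3) l(4) l(5) s1(1) s1(2) s1(3) m8 s2 A1 B1 r(1) r(2) r(3) r(4) C1 r(5) r(6)])
      }
      moreover
      { assume qq: "q = 10"
        have s1: "X 6 \<noteq> X 7" "Y 6 = X 7" "Y 7 = X 6" using h1 T1 by auto
        have m8: "X 8 = Y 8" using m[of 8] qq T1 by simp
        have m9: "X 9 = Y 9" using m[of 9] qq T1 by simp
        have s2: "Y 10 \<noteq> X 10" using h4 T2 qq by auto
        have A1: "occF (\<lambda>k. if k = 6 \<or> k = 7 then Y k else X k) a" using hA T1 by simp
        have B1: "occF (\<lambda>k. if k = 6 \<or> k = 7 then X k else Y k) b" using hB T1 by simp
        have C1: "occF (\<lambda>k. if k = 10 then Y k else X k) c" using hC T2 qq by simp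
        have r: "a \<le> 7" "10 \<le> a + 5" "b \<le> 7" "10 \<le> b + 5" "c \<le> 10" "10 \<le> c + 5" using ha hb hc T1 T2 qq by auto
        have False by (rule loc_SR_10[OF l(1) l(2) l(3) l(4) l(5) s1(1) s1(2) s1(3) m8 m9 s2 A1 B1 r(1) r(2) r(3) r(4) C1 r(5) r(6)])
      }
      moreover
      { assume qq: "q = 11"
        have s1: "X 6 \<noteq> X 7" "Y 6 = X 7" "Y 7 = X 6" using h1 T1 by auto
        have m8: "X 8 = Y 8" using m[of 8] qq T1 by simp
        have m9: "X 9 = Y 9" using m[of 9] qq T1 by simp
        have m10: "X 10 = Y 10" using m[of 10] qq T1 by simp
        have s2: "Y 11 \<noteq> X 11" using h4 T2 qq by auto
        have A1: "occF (\<lambda>k. if k = 6 \<or> k = 7 then Y k else X k) a" using hA T1 by simp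
        have B1: "occF (\<lambda>k. if k = 6 \<or> k = 7 then X k else Y k) b" using hB T1 by simp
        have C1: "occF (\<lambda>k. if k = 11 then Y k else X k) c" using hC T2 qq by simp
        have r: "a \<le> 7" "11 \<le> a + 5" "b \<le> 7" "11 \<le> b + 5" "c \<le> 11" "11 \<le> c + 5" using ha hb hc T1 T2 qq by auto
        have False by (rule loc_SR_11[OF l(1) l(2) l(3) l(4) l(5) s1(1) s1(2) s1(3) m8 m9 m10 s2 A1 B1 r(1) r(2) r(3) r(4) C1 r(5) r(6)])
      }
      moreover
      { assume qq: "q = 12"
        have s1: "X 6 \<noteq> X 7" "Y 6 = X 7" "Y 7 = X 6" using h1 T1 by auto
        have m8: "X 8 = Y 8" using m[of 8] qq T1 by simp
        have m9: "X 9 = Y 9" using m[of 9] qq T1 by simp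
        have m10: "X 10 = Y 10" using m[of 10] qq T1 by simp
        have m11: "X 11 = Y 11" using m[of 11] qq T1 by simp
        have s2: "Y 12 \<noteq> X 12" using h4 T2 qq by auto
        have A1: "occF (\<lambda>k. if k = 6 \<or> k = 7 then Y k else X k) a" using hA T1 by simp
        have B1: "occF (\<lambda>k. if k = 6 \<or> k = 7 then X k else Y k) b" using hB T1 by simp
        have C1: "occF (\<lambda>k. if k = 12 then Y k else X k) c" using hC T2 qq by simp
        have r: "a \<le> 7" "12 \<le> a + 5" "b \<le> 7" "12 \<le> b + 5" "c \<le> 12" "12 \<le> c + 5" using ha hb hc T1 T2 qq by auto
        have False by (rule loc_SR_12[OF l(1) l(2) l(3) l(4) l(5) s1(1) s1(2) s1(3) m8 m9 m10 m11 s2 A1 B1 r(1) r(2) r(3) r(4) C1 r(5) r(6)])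
      }
      moreover have "q = 8 \<or> q = 9 \<or> q = 10 \<or> q = 11 \<or> q = 12" using h3 ha T1 by auto
      ultimately have False by blast
    }
    ultimately have False by blast
  }
  moreover
  { assume T1: "\<not> sw1"
    { assume T2: "sw2"
      { assume qq: "q = 7"
        have s1: "Y 6 \<noteq> X 6" using h1 T1 by auto
        have s2: "X 7 \<noteq> X 8" "Y 7 = X 8" "Y 8 = X 7" using h4 T2 qq by auto
        have A1: "occF (\<lambda>k. if k = 6 then Y k else X k) a" using hA T1 by simp
        have B1: "occF (\<lambda>k. if k = 6 then X k else Y k) b" using hB T1 by simp
        have C1: "occF (\<lambda>k. if k = 7 \<or> k = 8 then Y k else X k) c" using hC T2 qq by simp
        have r: "a \<le> 6" "7 \<le> a + 5" "b \<le> 6" "7 \<le> b + 5" "c \<le> 8" "7 \<le> c + 5" using ha hb hc T1 T2 qq by auto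
        have False by (rule loc_RS_7[OF l(1) l(2) l(3) l(4) l(5) s1 s2(1) s2(2) s2(3) A1 B1 r(1) r(2) r(3) r(4) C1 r(5) r(6)])
      }
      moreover
      { assume qq: "q = 8"
        have s1: "Y 6 \<noteq> X 6" using h1 T1 by auto
        have m7: "X 7 = Y 7" using m[of 7] qq T1 by simp
        have s2: "X 8 \<noteq> X 9" "Y 8 = X 9" "Y 9 = X 8" using h4 T2 qq by auto
        have A1: "occF (\<lambda>k. if k = 6 then Y k else X k) a" using hA T1 by simp
        have B1: "occF (\<lambda>k. if k = 6 then X k else Y k) b" using hB T1 by simp
        have C1: "occF (\<lambda>k. if k = 8 \<or> k = 9 then Y k else X k) c" using hC T2 qq by simp
        have r: "a \<le> 6" "8 \<le> a + 5" "b \<le> 6" "8 \<le> b + 5" "c \<le> 9" "8 \<le> c + 5" using ha hb hc T1 T2 qq by auto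
        have False by (rule loc_RS_8[OF l(1) l(2) l(3) l(4) l(5) s1 m7 s2(1) s2(2) s2(3) A1 B1 r(1) r(2) r(3) r(4) C1 r(5) r(6)])
      }
      moreover
      { assume qq: "q = 9"
        have s1: "Y 6 \<noteq> X 6" using h1 T1 by auto
        have m7: "X 7 = Y 7" using m[of 7] qq T1 by simp
        have m8: "X 8 = Y 8" using m[of 8] qq T1 by simp
        have s2: "X 9 \<noteq> X 10" "Y 9 = X 10" "Y 10 = X 9" using h4 T2 qq by auto
        have A1: "occF (\<lambda>k. if k = 6 then Y k else X k) a" using hA T1 by simp
        have B1: "occF (\<lambda>k. if k = 6 then X k else Y k) b" using hB T1 by simp
        have C1: "occF (\<lambda>k. if k = 9 \<or> k = 10 then Y k else X k) c" using hC T2 qq by simp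
        have r: "a \<le> 6" "9 \<le> a + 5" "b \<le> 6" "9 \<le> b + 5" "c \<le> 10" "9 \<le> c + 5" using ha hb hc T1 T2 qq by auto
        have False by (rule loc_RS_9[OF l(1) l(2) l(3) l(4) l(5) s1 m7 m8 s2(1) s2(2) s2(3) A1 B1 r(1) r(2) r(3) r(4) C1 r(5) r(6)])
      }
      moreover
      { assume qq: "q = 10"
        have s1: "Y 6 \<noteq> X 6" using h1 T1 by auto
        have m7: "X 7 = Y 7" using m[of 7] qq T1 by simp
        have m8: "X 8 = Y 8" using m[of 8] qq T1 by simp
        have m9: "X 9 = Y 9" using m[of 9] qq T1 by simp
        have s2: "X 10 \<noteq> X 11" "Y 10 = X 11" "Y 11 = X 10" using h4 T2 qq by auto
        have A1: "occF (\<lambda>k. if k = 6 then Y k else X k) a" using hA T1 by simp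
        have B1: "occF (\<lambda>k. if k = 6 then X k else Y k) b" using hB T1 by simp
        have C1: "occF (\<lambda>k. if k = 10 \<or> k = 11 then Y k else X k) c" using hC T2 qq by simp
        have r: "a \<le> 6" "10 \<le> a + 5" "b \<le> 6" "10 \<le> b + 5" "c \<le> 11" "10 \<le> c + 5" using ha hb hc T1 T2 qq by auto
        have False by (rule loc_RS_10[OF l(1) l(2) l(3) l(4) l(5) s1 m7 m8 m9 s2(1) s2(2) s2(3) A1 B1 r(1) r(2) r(3) r(4) C1 r(5) r(6)])
      }
      moreover
      { assume qq: "q = 11"
        have s1: "Y 6 \<noteq> X 6" using h1 T1 by auto
        have m7: "X 7 = Y 7" using m[of 7] qq T1 by simp
        have m8: "X 8 = Y 8" using m[of 8] qq T1 by simp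
        have m9: "X 9 = Y 9" using m[of 9] qq T1 by simp
        have m10: "X 10 = Y 10" using m[of 10] qq T1 by simp
        have s2: "X 11 \<noteq> X 12" "Y 11 = X 12" "Y 12 = X 11" using h4 T2 qq by auto
        have A1: "occF (\<lambda>k. if k = 6 then Y k else X k) a" using hA T1 by simp
        have B1: "occF (\<lambda>k. if k = 6 then X k else Y k) b" using hB T1 by simp
        have C1: "occF (\<lambda>k. if k = 11 \<or> k = 12 then Y k else X k) c" using hC T2 qq by simp
        have r: "a \<le> 6" "11 \<le> a + 5" "b \<le> 6" "11 \<le> b + 5" "c \<le> 12" "11 \<le> c + 5" using ha hb hc T1 T2 qq by auto
        have False by (rule loc_RS_11[OF l(1) l(2) l(3) l(4) l(5) s1 m7 m8 m9 m10 s2(1) s2(2) s2(3) A1 B1 r(1) r(2) r(3) r(4) C1 r(5) r(6)])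
      }
      moreover have "q = 7 \<or> q = 8 \<or> q = 9 \<or> q = 10 \<or> q = 11" using h3 ha T1 by auto
      ultimately have False by blast
    }
    moreover
    { assume T2: "\<not> sw2"
      { assume qq: "q = 7"
        have s1: "Y 6 \<noteq> X 6" using h1 T1 by auto
        have s2: "Y 7 \<noteq> X 7" using h4 T2 qq by auto
        have s5: "X 6 = X 7" using h5 T1 T2 qq by auto
        have A1: "occF (\<lambda>k. if k = 6 then Y k else X k) a" using hA T1 by simp
        have B1: "occF (\<lambda>k. if k = 6 then X k else Y k) b" using hB T1 by simp
        have C1: "occF (\<lambda>k. if k = 7 then Y k else X k) c" using hC T2 qq by simp
        have r: "a \<le> 6" "7 \<le> a + 5" "b \<le> 6" "7 \<le> b + 5" "c \<le> 7" "7 \<le> c + 5" using ha hb hc T1 T2 qq by auto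
        have False by (rule loc_RR_7[OF l(1) l(2) l(3) l(4) l(5) s1 s2 s5 A1 B1 r(1) r(2) r(3) r(4) C1 r(5) r(6)])
      }
      moreover
      { assume qq: "q = 8"
        have s1: "Y 6 \<noteq> X 6" using h1 T1 by auto
        have m7: "X 7 = Y 7" using m[of 7] qq T1 by simp
        have s2: "Y 8 \<noteq> X 8" using h4 T2 qq by auto
        have A1: "occF (\<lambda>k. if k = 6 then Y k else X k) a" using hA T1 by simp
        have B1: "occF (\<lambda>k. if k = 6 then X k else Y k) b" using hB T1 by simp
        have C1: "occF (\<lambda>k. if k = 8 then Y k else X k) c" using hC T2 qq by simp
        have r: "a \<le> 6" "8 \<le> a + 5" "b \<le> 6" "8 \<le> b + 5" "c \<le> 8" "8 \<le> c + 5" using ha hb hc T1 T2 qq by auto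
        have False by (rule loc_RR_8[OF l(1) l(2) l(3) l(4) l(5) s1 m7 s2 A1 B1 r(1) r(2) r(3) r(4) C1 r(5) r(6)])
      }
      moreover
      { assume qq: "q = 9"
        have s1: "Y 6 \<noteq> X 6" using h1 T1 by auto
        have m7: "X 7 = Y 7" using m[of 7] qq T1 by simp
        have m8: "X 8 = Y 8" using m[of 8] qq T1 by simp
        have s2: "Y 9 \<noteq> X 9" using h4 T2 qq by auto
        have A1: "occF (\<lambda>k. if k = 6 then Y k else X k) a" using hA T1 by simp
        have B1: "occF (\<lambda>k. if k = 6 then X k else Y k) b" using hB T1 by simp
        have C1: "occF (\<lambda>k. if k = 9 then Y k else X k) c" using hC T2 qq by simp
        have r: "a \<le> 6" "9 \<le> a + 5" "b \<le> 6" "9 \<le> b + 5" "c \<le> 9" "9 \<le> c + 5" using ha hb hc T1 T2 qq by auto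
        have False by (rule loc_RR_9[OF l(1) l(2) l(3) l(4) l(5) s1 m7 m8 s2 A1 B1 r(1) r(2) r(3) r(4) C1 r(5) r(6)])
      }
      moreover
      { assume qq: "q = 10"
        have s1: "Y 6 \<noteq> X 6" using h1 T1 by auto
        have m7: "X 7 = Y 7" using m[of 7] qq T1 by simp
        have m8: "X 8 = Y 8" using m[of 8] qq T1 by simp
        have m9: "X 9 = Y 9" using m[of 9] qq T1 by simp
        have s2: "Y 10 \<noteq> X 10" using h4 T2 qq by auto
        have A1: "occF (\<lambda>k. if k = 6 then Y k else X k) a" using hA T1 by simp
        have B1: "occF (\<lambda>k. if k = 6 then X k else Y k) b" using hB T1 by simp
        have C1: "occF (\<lambda>k. if k = 10 then Y k else X k) c" using hC T2 qq by simp
        have r: "a \<le> 6" "10 \<le> a + 5" "b \<le> 6" "10 \<le> b + 5" "c \<le> 10" "10 \<le> c + 5" using ha hb hc T1 T2 qq by auto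
        have False by (rule loc_RR_10[OF l(1) l(2) l(3) l(4) l(5) s1 m7 m8 m9 s2 A1 B1 r(1) r(2) r(3) r(4) C1 r(5) r(6)])
      }
      moreover
      { assume qq: "q = 11"
        have s1: "Y 6 \<noteq> X 6" using h1 T1 by auto
        have m7: "X 7 = Y 7" using m[of 7] qq T1 by simp
        have m8: "X 8 = Y 8" using m[of 8] qq T1 by simp
        have m9: "X 9 = Y 9" using m[of 9] qq T1 by simp
        have m10: "X 10 = Y 10" using m[of 10] qq T1 by simp
        have s2: "Y 11 \<noteq> X 11" using h4 T2 qq by auto
        have A1: "occF (\<lambda>k. if k = 6 then Y k else X k) a" using hA T1 by simp
        have B1: "occF (\<lambda>k. if k = 6 then X k else Y k) b" using hB T1 by simp
        have C1: "occF (\<lambda>k. if k = 11 then Y k else X k) c" using hC T2 qq by simp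
        have r: "a \<le> 6" "11 \<le> a + 5" "b \<le> 6" "11 \<le> b + 5" "c \<le> 11" "11 \<le> c + 5" using ha hb hc T1 T2 qq by auto
        have False by (rule loc_RR_11[OF l(1) l(2) l(3) l(4) l(5) s1 m7 m8 m9 m10 s2 A1 B1 r(1) r(2) r(3) r(4) C1 r(5) r(6)])
      }
      moreover have "q = 7 \<or> q = 8 \<or> q = 9 \<or> q = 10 \<or> q = 11" using h3 ha T1 by auto
      ultimately have False by blast
    }
    ultimately have False by blast
  }
  ultimately show False by blast
qed

fun pos :: "edit_op \<Rightarrow> nat" where
  "pos (Rep i) = i" | "pos (Swp i) = i"

fun isS :: "edit_op \<Rightarrow> bool" where
  "isS (Rep i) = False" | "isS (Swp i) = True"

definition locopt :: "bool list \<Rightarrow> edit_op set \<Rightarrow> bool" where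
  "locopt u S \<longleftrightarrow> (\<forall>i. Rep i \<in> S \<and> Rep (Suc i) \<in> S \<longrightarrow> u!i = u!Suc i)"

lemma pos_le: "j \<in> modified x \<Longrightarrow> pos x \<le> j"
  by (cases x) auto

lemma le_pos: "j \<in> modified x \<Longrightarrow> j \<le> (if isS x then Suc (pos x) else pos x)"
  by (cases x) auto

lemma pos_in: "pos x \<in> modified x"
  by (cases x) auto

lemma mod_iff: "j \<in> modified x \<longleftrightarrow> (j = pos x \<or> (isS x \<and> j = Suc (pos x)))"
  by (cases x) auto

lemma occ_transfer:
  assumes "occ w A" "length w' = length w" "\<forall>i<6. w'!(A+i) = w!(A+i)"
  shows "occ w' A"
  using assms(1,2) assms(3)[rule_format, of 0] assms(3)[rule_format, of 1] assms(3)[rule_format, of 2]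
    assms(3)[rule_format, of 3] assms(3)[rule_format, of 4] assms(3)[rule_format, of 5]
  by (simp add: occ_def)

lemma occ_occF:
  assumes "occ w A" "\<forall>j<length w. w!j = H j"
  shows "occF H A"
proof -
  have l: "A + 6 \<le> length w" using assms(1) by (simp add: occ_def)
  have h: "\<forall>i<6. w!(A+i) = H (A+i)" using assms(2) l by auto
  show ?thesis using assms(1)
    using h[rule_format, of 0] h[rule_format, of 1] h[rule_format, of 2] h[rule_format, of 3]
      h[rule_format, of 4] h[rule_format, of 5]
    by (simp add: occ_def occF_def)
qed

lemma occF_shift:
  assumes "occF H A" "p \<le> A + 6" "\<And>j. p \<le> j + 6 \<Longrightarrow> G (j + 6 - p) = H j"
  shows "occF G (A + 6 - p)"
proof -
  have e: "\<And>i. G (A + 6 - p + i) = H (A + i)"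
  proof -
    fix i
    have "A + 6 - p + i = (A + i) + 6 - p" using assms(2) by arith
    then show "G (A + 6 - p + i) = H (A + i)" using assms(3)[of "A+i"] assms(2) by simp
  qed
  show ?thesis using assms(1) e[of 0] e[of 1] e[of 2] e[of 3] e[of 4] e[of 5]
    by (simp add: occF_def)
qed

lemma local_global:
  fixes u v :: "bool list" and p q A B C :: nat and sw1 sw2 :: bool
  assumes g0: "\<forall>j<p. u!j = v!j"
  and g1: "if sw1 then u!p \<noteq> u!(p+1) \<and> v!p = u!(p+1) \<and> v!(p+1) = u!p else v!p \<noteq> u!p"
  and g2: "\<forall>j. (if sw1 then p+1 else p) < j \<and> j < q \<longrightarrow> u!j = v!j"
  and g3: "(if sw1 then p+1 else p) < q"
  and g4: "if sw2 then u!q \<noteq> u!(q+1) \<and> v!q = u!(q+1) \<and> v!(q+1) = u!q else v!q \<noteq> u!q"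
  and g5: "\<not>sw1 \<and> \<not>sw2 \<and> q = p+1 \<longrightarrow> u!p = u!(p+1)"
  and gA: "A \<le> (if sw1 then p+1 else p)" "q \<le> A + 5"
     "occF (\<lambda>j. if j = p \<or> (sw1 \<and> j = p+1) then v!j else u!j) A"
  and gB: "B \<le> (if sw1 then p+1 else p)" "q \<le> B + 5"
     "occF (\<lambda>j. if j = p \<or> (sw1 \<and> j = p+1) then u!j else v!j) B"
  and gC: "C \<le> (if sw2 then q+1 else q)" "q \<le> C + 5"
     "occF (\<lambda>j. if j = q \<or> (sw2 \<and> j = q+1) then v!j else u!j) C"
  shows False
proof -
  define X where "X k = (if p + k < 6 then False else u!(p+k-6))" for k
  define Y where "Y k = (if p + k < 6 then False else v!(p+k-6))" for k
  have X: "X (j + 6 - p) = u!j" if "p \<le> j + 6" for j using that unfolding X_def by auto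
  have Y: "Y (j + 6 - p) = v!j" if "p \<le> j + 6" for j using that unfolding Y_def by auto
  have pq: "p < q" using g3 by (auto split: if_splits)
  have h0: "\<forall>k<6. X k = Y k"
  proof (intro allI impI)
    fix k :: nat assume k: "k < 6"
    show "X k = Y k"
    proof (cases "p + k < 6")
      case True then show ?thesis unfolding X_def Y_def by simp
    next
      case False
      then have "p + k - 6 < p" using k by arith
      then show ?thesis using g0 False unfolding X_def Y_def by simp
    qed
  qed
  have X6: "X 6 = u!p" "X 7 = u!(p+1)" "Y 6 = v!p" "Y 7 = v!(p+1)" unfolding X_def Y_def by auto
  have h1: "if sw1 then X 6 \<noteq> X 7 \<and> Y 6 = X 7 \<and> Y 7 = X 6 else Y 6 \<noteq> X 6"
    using g1 X6 by (cases sw1) auto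
  have h2: "\<forall>k. (if sw1 then 7 else 6) < k \<and> k < q + 6 - p \<longrightarrow> X k = Y k"
  proof (intro allI impI)
    fix k :: nat assume k: "(if sw1 then 7 else 6) < k \<and> k < q + 6 - p"
    then have kk: "\<not> p + k < 6" by (auto split: if_splits)
    have "(if sw1 then p+1 else p) < p + k - 6 \<and> p + k - 6 < q" using k by (auto split: if_splits)
    then have "u!(p+k-6) = v!(p+k-6)" using g2 by blast
    then show "X k = Y k" using kk unfolding X_def Y_def by simp
  qed
  have h3: "(if sw1 then 7 else 6) < q + 6 - p" using g3 by (auto split: if_splits)
  have Xq: "X (q + 6 - p) = u!q" "X (q + 6 - p + 1) = u!(q+1)"
     "Y (q + 6 - p) = v!q" "Y (q + 6 - p + 1) = v!(q+1)"
  proof -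
    have e1: "q + 1 + 6 - p = q + 6 - p + 1" using pq by arith
    show "X (q + 6 - p) = u!q" using X[of q] pq by simp
    show "X (q + 6 - p + 1) = u!(q+1)" using X[of "q+1", unfolded e1] pq by simp
    show "Y (q + 6 - p) = v!q" using Y[of q] pq by simp
    show "Y (q + 6 - p + 1) = v!(q+1)" using Y[of "q+1", unfolded e1] pq by simp
  qed
  have h4: "if sw2 then X (q + 6 - p) \<noteq> X (q + 6 - p + 1) \<and> Y (q + 6 - p) = X (q + 6 - p + 1) \<and> Y (q + 6 - p + 1) = X (q + 6 - p)
            else Y (q + 6 - p) \<noteq> X (q + 6 - p)"
    using g4 Xq by (cases sw2) auto
  have h5: "\<not>sw1 \<and> \<not>sw2 \<and> q + 6 - p = 7 \<longrightarrow> X 6 = X 7"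
    using g5 X6 pq by auto
  have pA: "p \<le> A + 6" and pB: "p \<le> B + 6" and pC: "p \<le> C + 6" using gA gB gC pq by auto
  have hA: "occF (\<lambda>k. if k = 6 \<or> (sw1 \<and> k = 7) then Y k else X k) (A + 6 - p)"
  proof (rule occF_shift[OF gA(3) pA])
    fix j assume j: "p \<le> j + 6"
    have "(j + 6 - p = 6) = (j = p)" "(j + 6 - p = 7) = (j = p + 1)" using j by arith+
    then show "(if j + 6 - p = 6 \<or> sw1 \<and> j + 6 - p = 7 then Y (j + 6 - p) else X (j + 6 - p)) =
          (if j = p \<or> sw1 \<and> j = p + 1 then v ! j else u ! j)" using X[OF j] Y[OF j] by simp
  qed
  have hB: "occF (\<lambda>k. if k = 6 \<or> (sw1 \<and> k = 7) then X k else Y k) (B + 6 - p)"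
  proof (rule occF_shift[OF gB(3) pB])
    fix j assume j: "p \<le> j + 6"
    have "(j + 6 - p = 6) = (j = p)" "(j + 6 - p = 7) = (j = p + 1)" using j by arith+
    then show "(if j + 6 - p = 6 \<or> sw1 \<and> j + 6 - p = 7 then X (j + 6 - p) else Y (j + 6 - p)) =
          (if j = p \<or> sw1 \<and> j = p + 1 then u ! j else v ! j)" using X[OF j] Y[OF j] by simp
  qed
  have hC: "occF (\<lambda>k. if k = q + 6 - p \<or> (sw2 \<and> k = q + 6 - p + 1) then Y k else X k) (C + 6 - p)"
  proof (rule occF_shift[OF gC(3) pC])
    fix j assume j: "p \<le> j + 6"
    have "(j + 6 - p = q + 6 - p) = (j = q)" "(j + 6 - p = q + 6 - p + 1) = (j = q + 1)" using j pq by arith+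
    then show "(if j + 6 - p = q + 6 - p \<or> sw2 \<and> j + 6 - p = q + 6 - p + 1 then Y (j + 6 - p) else X (j + 6 - p)) =
          (if j = q \<or> sw2 \<and> j = q + 1 then v ! j else u ! j)" using X[OF j] Y[OF j] by simp
  qed
  have ha: "A + 6 - p \<le> (if sw1 then 7 else 6)" "q + 6 - p \<le> A + 6 - p + 5"
    using gA pq by (auto split: if_splits)
  have hb: "B + 6 - p \<le> (if sw1 then 7 else 6)" "q + 6 - p \<le> B + 6 - p + 5"
    using gB pq by (auto split: if_splits)
  have hc: "C + 6 - p \<le> (if sw2 then q + 6 - p + 1 else q + 6 - p)" "q + 6 - p \<le> C + 6 - p + 5"
    using gC pq by (auto split: if_splits)
  show False
    by (rule local_core[OF h0 h1 h2 h3 h4 h5 ha hA hb hB hc hC])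
qed

lemma exists_min_pos:
  assumes "finite S" "S \<noteq> {}"
  obtains x where "x \<in> S" "\<forall>y\<in>S. pos x \<le> pos y"
proof -
  have "Min (pos ` S) \<in> pos ` S" using assms by simp
  then obtain x where x: "x \<in> S" "pos x = Min (pos ` S)" by auto
  have "\<forall>y\<in>S. pos x \<le> pos y" using x assms by simp
  then show ?thesis using that x by blast
qed

lemma ifF: "\<forall>j<n. f j = (if P j then a j else b j) \<Longrightarrow> j < n \<Longrightarrow> \<not> P j \<Longrightarrow> f j = b j"
  by simp

lemma ifT: "\<forall>j<n. f j = (if P j then a j else b j) \<Longrightarrow> j < n \<Longrightarrow> P j \<Longrightarrow> f j = a j"
  by simp

lemma notS: "\<not> isS x \<Longrightarrow> x = Rep (pos x)"
  by (cases x) auto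

lemma locopt_sub: "locopt u S \<Longrightarrow> T \<subseteq> S \<Longrightarrow> locopt u T"
  unfolding locopt_def by blast

lemma apply_formula:
  assumes "op_ok u x" "x \<in> S" "djs S" "j < length u"
  shows "apply_op u x ! j = (if j = pos x \<or> (isS x \<and> j = Suc (pos x)) then res u S ! j else u ! j)"
proof (cases "j \<in> modified x")
  case True
  have "res u S ! j = val u S j" using assms(4) by (simp add: nth_res)
  then show ?thesis using True assms val_cov[OF assms(2,3) True, of u]
    by (cases x) auto
next
  case False
  then show ?thesis using apply_unmod[OF False] mod_iff[of j x] by auto
qed

lemma safe:
  "finite S \<Longrightarrow> S \<noteq> {} \<Longrightarrow> djs S \<Longrightarrow> okall u S \<Longrightarrow> locopt u S \<Longrightarrow> (\<forall>s. \<not> occ u s)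
   \<Longrightarrow> (\<forall>s. \<not> occ (res u S) s) \<Longrightarrow> \<exists>x\<in>S. \<forall>s. \<not> occ (apply_op u x) s"
proof (induction "card S" arbitrary: S rule: less_induct)
  case less
  have fin: "finite S" and ne: "S \<noteq> {}" and d: "djs S" and ok: "okall u S" and lo: "locopt u S"
    and fu: "\<forall>s. \<not> occ u s" and fv: "\<forall>s. \<not> occ (res u S) s" using less.prems by auto
  obtain o1 where o1: "o1 \<in> S" "\<forall>y\<in>S. pos o1 \<le> pos y" using exists_min_pos[OF fin ne] by blast
  show ?case
  proof (cases "\<forall>s. \<not> occ (apply_op u o1) s")
    case True then show ?thesis using o1 by blast
  next
    case F1: False
    then obtain A where A: "occ (apply_op u o1) A" by blast
    let ?S' = "S - {o1}"
    have r1: "res (apply_op u o1) ?S' = res u S" by (rule res_remove[OF o1(1) d ok])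
    show ?thesis
    proof (cases "?S' = {}")
      case True
      then have "apply_op u o1 = res u S" using r1 res_empty by metis
      then show ?thesis using fv F1 by simp
    next
      case ne': False
      show ?thesis
      proof (cases "\<forall>s. \<not> occ (res u ?S') s")
        case True
        have "card ?S' < card S" by (rule card_Diff1_less[OF fin o1(1)])
        moreover have "finite ?S'" "djs ?S'" "okall u ?S'" "locopt u ?S'"
          using fin djs_sub[OF d] okall_sub[OF ok] locopt_sub[OF lo] by auto
        ultimately obtain x where "x \<in> ?S'" "\<forall>s. \<not> occ (apply_op u x) s"
          using less.hyps[of ?S'] ne' fu True by blast
        then show ?thesis by blast
      next
        case F2: False
        then obtain B where B: "occ (res u ?S') B" by blast
        have finS': "finite ?S'" using fin by simp
        obtain o2 where o2: "o2 \<in> ?S'" "\<forall>y\<in>?S'. pos o2 \<le> pos y" using exists_min_pos[OF finS' ne'] by blast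
        have o2S: "o2 \<in> S" and o21: "o2 \<noteq> o1" using o2 by auto
        have "\<forall>s. \<not> occ (apply_op u o2) s"
        proof
          fix C show "\<not> occ (apply_op u o2) C"
          proof
            assume C: "occ (apply_op u o2) C"
            define v where "v = res u S"
            define p where "p = pos o1"
            define q where "q = pos o2"
            define sw1 where "sw1 = isS o1"
            define sw2 where "sw2 = isS o2"
            define e where "e = (if sw1 then p + 1 else p)"
            define e2 where "e2 = (if sw2 then q + 1 else q)"
            have n: "length v = length u" unfolding v_def by simp
            have ok1: "op_ok u o1" and ok2: "op_ok u o2" using ok o1 o2S unfolding okall_def by auto
            have mod1: "\<And>j. j \<in> modified o1 \<longleftrightarrow> (j = p \<or> (sw1 \<and> j = p + 1))"
              unfolding p_def sw1_def by (simp add: mod_iff)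
            have mod2: "\<And>j. j \<in> modified o2 \<longleftrightarrow> (j = q \<or> (sw2 \<and> j = q + 1))"
              unfolding q_def sw2_def by (simp add: mod_iff)
            have pl: "p < length u" using ok1 mod_bound[OF ok1 pos_in[of o1]] unfolding p_def by simp
            have ql: "q < length u" using mod_bound[OF ok2 pos_in[of o2]] unfolding q_def by simp
            have pq: "p \<le> q" using o1(2) o2S unfolding p_def q_def by blast
            have unc: "v!j = u!j" if j: "j < length u" "j < p \<or> (e < j \<and> j < q)" for j
            proof -
              have "\<forall>y\<in>S. j \<notin> modified y"
              proof
                fix y assume y: "y \<in> S"
                show "j \<notin> modified y"
                proof
                  assume jy: "j \<in> modified y"
                  show False
                  proof (cases "y = o1")
                    case True
                    then show False using jy j mod1 unfolding e_def by (auto split: if_splits)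
                  next
                    case False
                    then have "pos o2 \<le> pos y" using o2(2) y by blast
                    moreover have "pos y \<le> j" using pos_le[OF jy] .
                    moreover have "pos o1 \<le> pos y" using o1(2) y by blast
                    ultimately show False using j unfolding p_def q_def e_def by (auto split: if_splits)
                  qed
                qed
              qed
              then show ?thesis unfolding v_def using j(1) by (simp add: nth_res val_unc)
            qed
            have g0: "\<forall>j<p. u!j = v!j" using unc pl by auto
            have g2: "\<forall>j. (if sw1 then p+1 else p) < j \<and> j < q \<longrightarrow> u!j = v!j"
              using unc ql unfolding e_def by auto
            have g1: "if sw1 then u!p \<noteq> u!(p+1) \<and> v!p = u!(p+1) \<and> v!(p+1) = u!p else v!p \<noteq> u!p"
            proof (cases o1)
              case (Rep i)
              then show ?thesis using o1(1) pl unfolding sw1_def p_def v_def by (simp add: nth_res val_Rep)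
            next
              case (Swp i)
              then show ?thesis using o1(1) d ok1 unfolding sw1_def p_def v_def by (simp add: nth_res val_Swp1 val_Swp2)
            qed
            have g4: "if sw2 then u!q \<noteq> u!(q+1) \<and> v!q = u!(q+1) \<and> v!(q+1) = u!q else v!q \<noteq> u!q"
            proof (cases o2)
              case (Rep i)
              then show ?thesis using o2S ql unfolding sw2_def q_def v_def by (simp add: nth_res val_Rep)
            next
              case (Swp i)
              then show ?thesis using o2S d ok2 unfolding sw2_def q_def v_def by (simp add: nth_res val_Swp1 val_Swp2)
            qed
            have g3: "(if sw1 then p+1 else p) < q"
            proof (rule ccontr)
              assume h: "\<not> (if sw1 then p+1 else p) < q"
              have "q = p \<or> (sw1 \<and> q = p + 1)" using h pq by (cases sw1) auto
              then have "q \<in> modified o1" using mod1[of q] by blast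
              moreover have "q \<in> modified o2" using pos_in[of o2] unfolding q_def .
              ultimately show False using djs_other[OF d o1(1) o2S] o21 by blast
            qed
            have g5: "\<not>sw1 \<and> \<not>sw2 \<and> q = p+1 \<longrightarrow> u!p = u!(p+1)"
            proof
              assume h: "\<not>sw1 \<and> \<not>sw2 \<and> q = p+1"
              have "o1 = Rep p" using h notS[of o1] unfolding sw1_def p_def by blast
              moreover have "o2 = Rep q" using h notS[of o2] unfolding sw2_def q_def by blast
              ultimately have "Rep p \<in> S" "Rep (Suc p) \<in> S" using o1(1) o2S h by auto
              then show "u!p = u!(p+1)" using lo unfolding locopt_def by auto
            qed
            have s1: "\<forall>j<length (apply_op u o1). apply_op u o1 ! j = (if j = p \<or> (sw1 \<and> j = p+1) then v!j else u!j)"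
              using apply_formula[OF ok1 o1(1) d] unfolding v_def p_def sw1_def by auto
            have A1: "A \<le> e"
            proof (rule ccontr)
              assume h: "\<not> A \<le> e"
              have "\<forall>i<6. u!(A+i) = apply_op u o1 ! (A+i)"
              proof (intro allI impI)
                fix i :: nat assume "i < 6"
                have "A + i \<notin> modified o1" using h mod1 unfolding e_def by (auto split: if_splits)
                then show "u!(A+i) = apply_op u o1 ! (A+i)" using apply_unmod[of "A+i" o1 u] by simp
              qed
              then have "occ u A" using occ_transfer[OF A] by simp
              then show False using fu by blast
            qed
            have A2: "q \<le> A + 5"
            proof (rule ccontr)
              assume h: "\<not> q \<le> A + 5"
              have la: "A + 6 \<le> length u" using A by (simp add: occ_def)
              have "\<forall>i<6. v!(A+i) = apply_op u o1 ! (A+i)"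
              proof (intro allI impI)
                fix i :: nat assume i: "i < 6"
                show "v!(A+i) = apply_op u o1 ! (A+i)"
                proof (cases "A + i = p \<or> (sw1 \<and> A + i = p+1)")
                  case True
                  have "apply_op u o1 ! (A+i) = v!(A+i)" by (rule ifT[OF s1]) (use la i True in auto)
                  then show ?thesis by simp
                next
                  case False
                  then have "A + i < p \<or> (e < A + i \<and> A + i < q)" using h i unfolding e_def by (auto split: if_splits)
                  then have "v!(A+i) = u!(A+i)" using unc[of "A+i"] la i by auto
                  moreover have "apply_op u o1 ! (A+i) = u!(A+i)" by (rule ifF[OF s1]) (use la i False in auto)
                  ultimately show ?thesis by simp
                qed
              qed
              then have "occ v A" using occ_transfer[OF A] n by simp
              then show False using fv unfolding v_def by blast
            qed
            have A3: "occF (\<lambda>j. if j = p \<or> (sw1 \<and> j = p+1) then v!j else u!j) A"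
              by (rule occ_occF[OF A s1])
            have t1: "\<forall>j<length (res u ?S'). res u ?S' ! j = (if j = p \<or> (sw1 \<and> j = p+1) then u!j else v!j)"
            proof (intro allI impI)
              fix j assume "j < length (res u ?S')"
              then have j: "j < length u" by simp
              show "res u ?S' ! j = (if j = p \<or> (sw1 \<and> j = p+1) then u!j else v!j)"
              proof (cases "j \<in> modified o1")
                case True
                have "\<forall>y\<in>?S'. j \<notin> modified y" using True djs_other[OF d o1(1)] by blast
                then have "res u ?S' ! j = u!j" using j by (simp add: nth_res val_unc)
                then show ?thesis using True mod1 by simp
              next
                case False
                have "val u ?S' j = val u S j"
                proof (cases "\<exists>y\<in>S. j \<in> modified y")
                  case True
                  then obtain y where y: "y \<in> S" "j \<in> modified y" by blast
                  then have "y \<in> ?S'" using False by auto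
                  then show ?thesis using val_transfer[of y ?S' S j u u] y djs_sub[OF d] d by blast
                next
                  case nc: False
                  then show ?thesis using val_unc[of ?S' j u] val_unc[of S j u] by blast
                qed
                moreover have nc: "\<not>(j = p \<or> (sw1 \<and> j = p+1))" using False mod1 by blast
                ultimately have "res u ?S' ! j = v ! j" using j unfolding v_def by (simp add: nth_res)
                then show ?thesis by (simp only: if_not_P[OF nc])
              qed
            qed
            have B1: "B \<le> e"
            proof (rule ccontr)
              assume h: "\<not> B \<le> e"
              have "\<forall>i<6. v!(B+i) = res u ?S' ! (B+i)"
              proof (intro allI impI)
                fix i :: nat assume i: "i < 6"
                have "\<not>(B + i = p \<or> (sw1 \<and> B + i = p+1))" using h unfolding e_def by (auto split: if_splits)
                moreover have "B + i < length u" using B i by (simp add: occ_def)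
                ultimately have "res u ?S' ! (B+i) = v!(B+i)" using ifF[OF t1] by simp
                then show "v!(B+i) = res u ?S' ! (B+i)" by simp
              qed
              then have "occ v B" using occ_transfer[OF B] n by simp
              then show False using fv unfolding v_def by blast
            qed
            have B2: "q \<le> B + 5"
            proof (rule ccontr)
              assume h: "\<not> q \<le> B + 5"
              have lb: "B + 6 \<le> length u" using B by (simp add: occ_def)
              have "\<forall>i<6. u!(B+i) = res u ?S' ! (B+i)"
              proof (intro allI impI)
                fix i :: nat assume i: "i < 6"
                show "u!(B+i) = res u ?S' ! (B+i)"
                proof (cases "B + i = p \<or> (sw1 \<and> B + i = p+1)")
                  case True
                  have "res u ?S' ! (B+i) = u!(B+i)" by (rule ifT[OF t1]) (use lb i True in auto)
                  then show ?thesis by simp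
                next
                  case False
                  then have "B + i < p \<or> (e < B + i \<and> B + i < q)" using h i unfolding e_def by (auto split: if_splits)
                  then have "v!(B+i) = u!(B+i)" using unc[of "B+i"] lb i by auto
                  moreover have "res u ?S' ! (B+i) = v!(B+i)" by (rule ifF[OF t1]) (use lb i False in auto)
                  ultimately show ?thesis by simp
                qed
              qed
              then have "occ u B" using occ_transfer[OF B] by simp
              then show False using fu by blast
            qed
            have B3: "occF (\<lambda>j. if j = p \<or> (sw1 \<and> j = p+1) then u!j else v!j) B"
              by (rule occ_occF[OF B t1])
            have s2: "\<forall>j<length (apply_op u o2). apply_op u o2 ! j = (if j = q \<or> (sw2 \<and> j = q+1) then v!j else u!j)"
              using apply_formula[OF ok2 o2S d] unfolding v_def q_def sw2_def by auto
            have C1: "C \<le> e2"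
            proof (rule ccontr)
              assume h: "\<not> C \<le> e2"
              have "\<forall>i<6. u!(C+i) = apply_op u o2 ! (C+i)"
              proof (intro allI impI)
                fix i :: nat assume "i < 6"
                have "C + i \<notin> modified o2" using h mod2 unfolding e2_def by (auto split: if_splits)
                then show "u!(C+i) = apply_op u o2 ! (C+i)" using apply_unmod[of "C+i" o2 u] by simp
              qed
              then have "occ u C" using occ_transfer[OF C] by simp
              then show False using fu by blast
            qed
            have C2: "q \<le> C + 5"
            proof (rule ccontr)
              assume h: "\<not> q \<le> C + 5"
              have "\<forall>i<6. u!(C+i) = apply_op u o2 ! (C+i)"
              proof (intro allI impI)
                fix i :: nat assume "i < 6"
                then have "C + i \<notin> modified o2" using h mod2 by auto
                then show "u!(C+i) = apply_op u o2 ! (C+i)" using apply_unmod[of "C+i" o2 u] by simp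
              qed
              then have "occ u C" using occ_transfer[OF C] by simp
              then show False using fu by blast
            qed
            have C3: "occF (\<lambda>j. if j = q \<or> (sw2 \<and> j = q+1) then v!j else u!j) C"
              by (rule occ_occF[OF C s2])
            show False
              by (rule local_global[OF g0 g1 g2 g3 g4 g5 _ A2 A3 _ B2 B3 _ C2 C3])
                 (use A1 B1 C1 in \<open>auto simp: e_def e2_def\<close>)
          qed
        qed
        then show ?thesis using o2S by blast
      qed
    qed
  qed
qed

lemma order_plan:
  "finite S \<Longrightarrow> djs S \<Longrightarrow> okall u S \<Longrightarrow> locopt u S \<Longrightarrow> (\<forall>s. \<not> occ u s) \<Longrightarrow> (\<forall>s. \<not> occ (res u S) s) \<Longrightarrow>
   \<exists>os. set os = S \<and> distinct os \<and> transforms u os (res u S) \<and> (\<forall>w\<in>set (run u os). \<forall>s. \<not> occ w s)"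
proof (induction "card S" arbitrary: S u rule: less_induct)
  case less
  have fin: "finite S" and d: "djs S" and ok: "okall u S" and lo: "locopt u S"
    and fu: "\<forall>s. \<not> occ u s" and fv: "\<forall>s. \<not> occ (res u S) s" using less.prems by auto
  show ?case
  proof (cases "S = {}")
    case True
    then have "set [] = S \<and> distinct [] \<and> transforms u [] (res u S) \<and> (\<forall>w\<in>set (run u []). \<forall>s. \<not> occ w s)"
      using fu unfolding transforms_def by simp
    then show ?thesis by blast
  next
    case ne: False
    obtain x where x: "x \<in> S" "\<forall>s. \<not> occ (apply_op u x) s" using safe[OF fin ne d ok lo fu fv] by blast
    let ?u = "apply_op u x"
    let ?S = "S - {x}"
    have r: "res ?u ?S = res u S" by (rule res_remove[OF x(1) d ok])
    have okx: "op_ok u x" using ok x(1) unfolding okall_def by blast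
    have dis: "\<And>y j. y \<in> ?S \<Longrightarrow> j \<in> modified y \<Longrightarrow> j \<notin> modified x"
      using djs_other[OF d] x(1) by blast
    have ok': "okall ?u ?S"
      unfolding okall_def
    proof
      fix y assume y: "y \<in> ?S"
      have "\<forall>j\<in>modified y. ?u!j = u!j" using dis[OF y] apply_unmod by blast
      then have "op_ok ?u y = op_ok u y" by (intro op_ok_transfer) simp_all
      then show "op_ok ?u y" using ok y unfolding okall_def by blast
    qed
    have lo': "locopt ?u ?S"
      unfolding locopt_def
    proof (intro allI impI)
      fix i assume h: "Rep i \<in> ?S \<and> Rep (Suc i) \<in> ?S"
      have "i \<notin> modified x" "Suc i \<notin> modified x" using dis h by auto
      then have "?u!i = u!i" "?u!Suc i = u!Suc i" using apply_unmod by blast+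
      moreover have "u!i = u!Suc i" using lo h unfolding locopt_def by blast
      ultimately show "?u!i = ?u!Suc i" by simp
    qed
    have "card ?S < card S" by (rule card_Diff1_less[OF fin x(1)])
    moreover have "finite ?S" "djs ?S" using fin djs_sub[OF d] by auto
    moreover have "\<forall>s. \<not> occ (res ?u ?S) s" using r fv by simp
    ultimately obtain os where os: "set os = ?S" "distinct os" "transforms ?u os (res ?u ?S)"
      "\<forall>w\<in>set (run ?u os). \<forall>s. \<not> occ w s"
      using less.hyps[of ?S ?u] ok' lo' x(2) by blast
    have "set (x # os) = S" using os(1) x(1) by auto
    moreover have "distinct (x # os)" using os(1,2) by auto
    moreover have "transforms u (x # os) (res u S)"
      using os(3) okx r run_ne[of ?u os] unfolding transforms_def by (simp add: last_ConsR)
    moreover have "\<forall>w\<in>set (run u (x # os)). \<forall>s. \<not> occ w s" using os(4) fu by simp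
    ultimately show ?thesis by blast
  qed
qed

lemma merge:
  assumes p: "plan u S v" and r1: "Rep i \<in> S" and r2: "Rep (Suc i) \<in> S" and ne: "u!i \<noteq> u!Suc i"
  shows "\<exists>S2. plan u S2 v \<and> card S2 < card S"
proof -
  have fin: "finite S" and d: "djs S" and ok: "okall u S" and r: "res u S = v"
    using p unfolding plan_def by auto
  let ?R = "S - {Rep i, Rep (Suc i)}"
  let ?S = "insert (Swp i) ?R"
  have si: "Suc i < length u" using ok r2 unfolding okall_def by auto
  have cov: "\<And>y j. y \<in> S \<Longrightarrow> j \<in> modified y \<Longrightarrow> (j = i \<or> j = Suc i) \<Longrightarrow> y = Rep i \<or> y = Rep (Suc i)"
  proof -
    fix y j assume y: "y \<in> S" "j \<in> modified y" "j = i \<or> j = Suc i"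
    then show "y = Rep i \<or> y = Rep (Suc i)"
      using djs_other[OF d y(1) r1, of j] djs_other[OF d y(1) r2, of j] by auto
  qed
  have dS: "djs ?S"
    unfolding djs_def
  proof (intro ballI impI)
    fix x y assume x: "x \<in> ?S" and y: "y \<in> ?S" and xy: "x \<noteq> y"
    show "modified x \<inter> modified y = {}"
    proof (cases "x = Swp i")
      case True
      then have yR: "y \<in> ?R" using y xy by auto
      have "\<forall>j\<in>modified y. j \<noteq> i \<and> j \<noteq> Suc i" using cov yR by blast
      then show ?thesis using True by auto
    next
      case xn: False
      then have xR: "x \<in> ?R" using x by auto
      show ?thesis
      proof (cases "y = Swp i")
        case True
        have "\<forall>j\<in>modified x. j \<noteq> i \<and> j \<noteq> Suc i" using cov xR by blast
        then show ?thesis using True by auto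
      next
        case False
        then have "y \<in> ?R" using y by auto
        then show ?thesis using xR xy d unfolding djs_def by blast
      qed
    qed
  qed
  have okS: "okall u ?S" using ok si ne unfolding okall_def by auto
  have rS: "res u ?S = v"
  proof (rule nth_equalityI)
    show "length (res u ?S) = length v" using r by auto
    fix k assume "k < length (res u ?S)"
    then have k: "k < length u" by simp
    have vk: "v!k = val u S k" using r k by (metis nth_res)
    show "res u ?S ! k = v ! k"
    proof (cases "k = i")
      case True
      then show ?thesis using vk k dS ne by (simp add: nth_res val_Swp1 val_Rep[OF r1])
    next
      case ki: False
      show ?thesis
      proof (cases "k = Suc i")
        case True
        then show ?thesis using vk k dS ne by (simp add: nth_res val_Swp2 val_Rep[OF r2])
      next
        case ksi: False
        show ?thesis
        proof (cases "\<exists>y\<in>S. k \<in> modified y")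
          case True
          then obtain y where y: "y \<in> S" "k \<in> modified y" by blast
          have "y \<noteq> Rep i" "y \<noteq> Rep (Suc i)" using y ki ksi by auto
          then have "y \<in> ?S" using y by auto
          then have "val u ?S k = val u S k" using val_transfer[of y ?S S k u u] y dS d by blast
          then show ?thesis using vk k by (simp add: nth_res)
        next
          case False
          have u1: "\<forall>y\<in>S. k \<notin> modified y" using False by blast
          have u2: "\<forall>y\<in>?S. k \<notin> modified y" using False ki ksi by auto
          show ?thesis using vk k val_unc[OF u1] val_unc[OF u2] by (simp add: nth_res)
        qed
      qed
    qed
  qed
  have "Swp i \<notin> S" using djs_other[OF d _ r1, of "Swp i" i] by auto
  then have "card ?S = card ?R + 1" using fin by simp
  moreover have "card ?R < card S"
    using fin r1 r2 by (intro psubset_card_mono) auto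
  moreover have "card ?R + 1 < card S"
  proof -
    have "card ?R = card S - 2" using fin r1 r2 by (simp add: card_Diff_subset)
    moreover have "2 \<le> card S"
    proof -
      have "{Rep i, Rep (Suc i)} \<subseteq> S" using r1 r2 by auto
      then have "card {Rep i, Rep (Suc i)} \<le> card S" using fin by (intro card_mono) auto
      then show ?thesis by simp
    qed
    ultimately show ?thesis by simp
  qed
  ultimately have "card ?S < card S" by simp
  moreover have "plan u ?S v" unfolding plan_def using fin dS okS rS by auto
  ultimately show ?thesis by blast
qed

lemma some_plan:
  assumes "length v = length u"
  shows "plan u (Rep ` {k. k < length u \<and> u!k \<noteq> v!k}) v"
proof -
  let ?S = "Rep ` {k. k < length u \<and> u!k \<noteq> v!k}"
  have "finite ?S" by simp
  moreover have "djs ?S" unfolding djs_def by auto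
  moreover have "okall u ?S" unfolding okall_def by auto
  moreover have "res u ?S = v"
  proof (rule nth_equalityI)
    show "length (res u ?S) = length v" using assms by simp
    fix k assume "k < length (res u ?S)"
    then have k: "k < length u" by simp
    show "res u ?S ! k = v ! k"
    proof (cases "u!k \<noteq> v!k")
      case True
      then have "Rep k \<in> ?S" using k by blast
      then show ?thesis using k True by (simp add: nth_res val_Rep)
    next
      case False
      have "\<forall>y\<in>?S. k \<notin> modified y" using False by auto
      then show ?thesis using k False by (simp add: nth_res val_unc)
    qed
  qed
  ultimately show ?thesis unfolding plan_def by blast
qed

lemma min_plan:
  assumes "length v = length u"
  shows "\<exists>S. plan u S v \<and> (\<forall>S'. plan u S' v \<longrightarrow> card S \<le> card S')"
  using ex_has_least_nat[of "\<lambda>S. plan u S v", OF some_plan[OF assms], of card] by blast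

lemma min_locopt:
  assumes "plan u S v" "\<forall>S'. plan u S' v \<longrightarrow> card S \<le> card S'"
  shows "locopt u S"
  unfolding locopt_def
proof (intro allI impI)
  fix i assume h: "Rep i \<in> S \<and> Rep (Suc i) \<in> S"
  show "u!i = u!Suc i"
  proof (rule ccontr)
    assume "u!i \<noteq> u!Suc i"
    then obtain S2 where "plan u S2 v" "card S2 < card S" using merge[OF assms(1)] h by blast
    then show False using assms(2) by fastforce
  qed
qed

theorem mainTheorem4:
  shows "tilde_isometric [True, True, True, False, False, False]"
  unfolding tilde_isometric_def
proof (intro allI impI)
  fix m :: nat and u v :: "bool list"
  assume m: "length [True, True, True, False, False, False] < m"
  assume h: "length u = m \<and> length v = m \<and> f_free [True, True, True, False, False, False] u \<and>
             f_free [True, True, True, False, False, False] v"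
  have fu: "\<forall>s. \<not> occ u s" using h by (simp add: free_iff)
  have fv: "\<forall>s. \<not> occ v s" using h by (simp add: free_iff)
  have lv: "length v = length u" using h by simp
  obtain S where S: "plan u S v" "\<forall>S'. plan u S' v \<longrightarrow> card S \<le> card S'" using min_plan[OF lv] by blast
  have fin: "finite S" and d: "djs S" and ok: "okall u S" and r: "res u S = v" using S(1) unfolding plan_def by auto
  have lo: "locopt u S" by (rule min_locopt[OF S])
  have fv': "\<forall>s. \<not> occ (res u S) s" using r fv by simp
  obtain os where os: "set os = S" "distinct os" "transforms u os (res u S)" "\<forall>w\<in>set (run u os). \<forall>s. \<not> occ w s"
    using order_plan[OF fin d ok lo fu fv'] by blast
  have t: "transforms u os v" using os(3) r by simp
  have len: "length os = card S" using distinct_card[OF os(2)] os(1) by simp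
  have dist: "dist_tilde u v = card S"
  proof (rule antisym)
    have "(LEAST k. \<exists>os. transforms u os v \<and> length os = k) \<le> length os"
      by (rule Least_le) (use t in blast)
    then show "dist_tilde u v \<le> card S" unfolding dist_tilde_def using len by simp
  next
    have "\<exists>os'. transforms u os' v \<and> length os' = (LEAST k. \<exists>os. transforms u os v \<and> length os = k)"
      by (rule LeastI[of _ "length os"]) (use t in blast)
    then obtain os1 where o1: "transforms u os1 v" "length os1 = dist_tilde u v"
      unfolding dist_tilde_def by blast
    obtain S1 where S1: "plan u S1 v" "card S1 \<le> length os1" using N_lemma[OF o1(1)] by blast
    have "card S \<le> card S1" using S(2) S1(1) by blast
    then show "card S \<le> dist_tilde u v" using S1(2) o1(2) by linarith
  qed
  have dj: "\<forall>i j. i < j \<and> j < length os \<longrightarrow> modified (os ! i) \<inter> modified (os ! j) = {}"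
  proof (intro allI impI)
    fix i j assume ij: "i < j \<and> j < length os"
    then have "os ! i \<noteq> os ! j" by (simp add: nth_eq_iff_index_eq[OF os(2)])
    moreover have "os ! i \<in> S" "os ! j \<in> S" using ij os(1) nth_mem by (metis less_trans)+
    ultimately show "modified (os ! i) \<inter> modified (os ! j) = {}" using d unfolding djs_def by blast
  qed
  have "minimal_transformation u os v"
    unfolding minimal_transformation_def using t len dist dj by simp
  moreover have "f_free_transformation [True, True, True, False, False, False] u os"
    unfolding f_free_transformation_def using os(4) by (simp add: free_iff)
  ultimately show "\<exists>os. minimal_transformation u os v \<and> f_free_transformation [True, True, True, False, False, False] u os"
    by blast
qed

end
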